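(* (a) Let $H$ be a connected, $\Delta$-regular digraph and $\delta>0$. If $n^{-2/\Delta}\ll p\ll1$, then \[ \frac{\Phi_{n,p}(H,\delta)}{n^2p^\Delta\log(1/p)}\le\delta^{2/\mathsf v(H)}+o(1). \] (b) Let $H$ be a digraph with maximum degree $\Delta$ and $\delta>0$. If $n^{-1/\Delta}\ll p\ll1$, then \[ \frac{\Phi_{n,p}(H,\delta)}{n^2p^\Delta\log(1/p)}\le\inf_{x_1,x_2\ge0,\ 0\le y_1,y_2\le1}\{x_1y_1+x_2y_2:\bar f_H(x_1,x_2,y_1,y_2)=1+\delta\}+o(1). \] Further, the infimum on the right-hand side is obtained when $y_1\vee y_2=1$ (restricting to $\max(y_1,y_2)=1$ does not change its value).
   Context: A digraph has no self-loops and at most one directed edge per ordered pair of vertices; $\mathsf v(H),\mathsf e(H)$ are the numbers of vertices and edges; degree = in-degree + out-degree; $\Delta$ is the maximum degree; $\Delta$-regular means all degrees equal $\Delta$; $p=p(n)$ and asymptotics are as $n\to\infty$. $\mathcal Q_n$ is the set of $n\times n$ matrices with zero diagonal and entries in $[0,1]$; $t(H,Q)=n^{-\mathsf v(H)}\sum_{\phi:\mathsf V(H)\to[n]}\prod_{(i,j)\in\mathsf E(H)}Q(\phi(i),\phi(j))$; $I_p(x)=x\log\frac xp+(1-x)\log\frac{1-x}{1-p}$, $I_p(Q)=\sum_{i\neq j}I_p(Q(i,j))$; $\Phi_{n,p}(H,\delta)=\inf_{Q\in\mathcal Q_n}\{I_p(Q):t(H,Q)\ge(1+\delta)p^{\mathsf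 e(H)}\}$. $H^*$ is the induced subgraph on vertices of degree $\Delta$, $\mathcal S_H$ the set of independent sets of $H^*$ (including $\emptyset$). For $S$: $\mathsf N^+(S)$ = vertices $v\notin S$ with an edge $(u,v)$, $u\in S$; $\mathsf N^-(S)$ = vertices $v\notin S$ with an edge $(v,u)$, $u\in S$; $\mathsf N^{\pm}(S)=\mathsf N^+(S)\cap\mathsf N^-(S)$, $\mathsf N^{+,0}(S)=\mathsf N^+(S)\setminus\mathsf N^-(S)$, $\mathsf N^{-,0}(S)=\mathsf N^-(S)\setminus\mathsf N^+(S)$, with $\mathsf n^{\pm}(S),\mathsf n^{+,0}(S),\mathsf n^{-,0}(S)$ their cardinalities. $\mathsf v^+(S)$, $\mathsf v^-(S)$, $\mathsf v^{\pm}(S)$ are the numbers of vertices of $S$ with no in-neighbours, no out-neighbours, and both in- and out-neighbours in $H$, respectively. Define \[ \bar f_H(x_1,x_2,y_1,y_2)=\sum_{S\in\mathcal S_H}x_1^{\mathsf v^+(S)}x_2^{\mathsf v^-(S)}(x_1\wedge x_2)^{\mathsf v^{\pm}(S)}y_1^{\mathsf n^{+,0}(S)}y_2^{\mathsf n^{-,0}(S)}(y_1\wedge y_2)^{\mathsf n^{\pm}(S)}. \] *)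

theory Defs
  imports Complex_Main "HOL-Library.FuncSet" "HOL-Library.Landau_Symbols"
begin

definition digraph :: "('v \<times> 'v) set \<Rightarrow> bool" where
  "digraph E \<longleftrightarrow> (\<forall>v. (v, v) \<notin> E)"

definition outdeg :: "('v \<times> 'v) set \<Rightarrow> 'v \<Rightarrow> nat" where
  "outdeg E v = card {u. (v, u) \<in> E}"

definition indeg :: "('v \<times> 'v) set \<Rightarrow> 'v \<Rightarrow> nat" where
  "indeg E v = card {u. (u, v) \<in> E}"

definition deg :: "('v \<times> 'v) set \<Rightarrow> 'v \<Rightarrow> nat" where
  "deg E v = indeg E v + outdeg E v"

definition maxdeg :: "('v \<times> 'v) set \<Rightarrow> nat" where
  "maxdeg E = Max (range (deg E))"

definition regular :: "('v \<times> 'v) set \<Rightarrow> nat \<Rightarrow> bool" where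
  "regular E d \<longleftrightarrow> (\<forall>v. deg E v = d)"

text \<open>Connected = weakly connected (underlying undirected graph connected).\<close>
definition weakly_connected :: "('v \<times> 'v) set \<Rightarrow> bool" where
  "weakly_connected E \<longleftrightarrow> (\<forall>u v. (u, v) \<in> (E \<union> E\<inverse>)\<^sup>*)"

definition Qset :: "nat \<Rightarrow> (nat \<Rightarrow> nat \<Rightarrow> real) set" where
  "Qset n = {Q. (\<forall>i<n. Q i i = 0) \<and> (\<forall>i<n. \<forall>j<n. 0 \<le> Q i j \<and> Q i j \<le> 1)}"

definition hom_density :: "('v::finite \<times> 'v) set \<Rightarrow> nat \<Rightarrow> (nat \<Rightarrow> nat \<Rightarrow> real) \<Rightarrow> real" where
  "hom_density E n Q =
     (\<Sum>\<phi>\<in>(UNIV::'v set) \<rightarrow>\<^sub>E {..<n}. \<Prod>e\<in>E. Q (\<phi> (fst e)) (\<phi> (snd e))) / real n ^ card (UNIV::'v set)"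

text \<open>Relative entropy I_p(x); at x = 0 or x = 1 the vanishing factor makes the term 0
  (convention 0 log 0 = 0).\<close>
definition Ient :: "real \<Rightarrow> real \<Rightarrow> real" where
  "Ient p x = x * ln (x / p) + (1 - x) * ln ((1 - x) / (1 - p))"

definition Ient_mat :: "real \<Rightarrow> nat \<Rightarrow> (nat \<Rightarrow> nat \<Rightarrow> real) \<Rightarrow> real" where
  "Ient_mat p n Q = (\<Sum>i<n. \<Sum>j<n. if i \<noteq> j then Ient p (Q i j) else 0)"

definition Phi :: "('v::finite \<times> 'v) set \<Rightarrow> nat \<Rightarrow> real \<Rightarrow> real \<Rightarrow> real" where
  "Phi E n p \<delta> = Inf {Ient_mat p n Q | Q. Q \<in> Qset n \<and> hom_density E n Q \<ge> (1 + \<delta>) * p ^ card E}"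

definition indep_sets :: "('v \<times> 'v) set \<Rightarrow> 'v set set" where
  "indep_sets E = {S. S \<subseteq> {v. deg E v = maxdeg E} \<and> (\<forall>u\<in>S. \<forall>v\<in>S. (u, v) \<notin> E)}"

definition Nplus :: "('v \<times> 'v) set \<Rightarrow> 'v set \<Rightarrow> 'v set" where
  "Nplus E S = {v. v \<notin> S \<and> (\<exists>u\<in>S. (u, v) \<in> E)}"

definition Nminus :: "('v \<times> 'v) set \<Rightarrow> 'v set \<Rightarrow> 'v set" where
  "Nminus E S = {v. v \<notin> S \<and> (\<exists>u\<in>S. (v, u) \<in> E)}"

definition vplus :: "('v \<times> 'v) set \<Rightarrow> 'v set \<Rightarrow> nat" where
  "vplus E S = card {v\<in>S. \<not> (\<exists>u. (u, v) \<in> E)}"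

definition vminus :: "('v \<times> 'v) set \<Rightarrow> 'v set \<Rightarrow> nat" where
  "vminus E S = card {v\<in>S. \<not> (\<exists>u. (v, u) \<in> E)}"

definition vpm :: "('v \<times> 'v) set \<Rightarrow> 'v set \<Rightarrow> nat" where
  "vpm E S = card {v\<in>S. (\<exists>u. (u, v) \<in> E) \<and> (\<exists>u. (v, u) \<in> E)}"

definition fbar :: "('v \<times> 'v) set \<Rightarrow> real \<Rightarrow> real \<Rightarrow> real \<Rightarrow> real \<Rightarrow> real" where
  "fbar E x1 x2 y1 y2 =
     (\<Sum>S\<in>indep_sets E.
        x1 ^ vplus E S * x2 ^ vminus E S * (min x1 x2) ^ vpm E S
        * y1 ^ card (Nplus E S - Nminus E S) * y2 ^ card (Nminus E S - Nplus E S)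
        * (min y1 y2) ^ card (Nplus E S \<inter> Nminus E S))"

end

theory Submission
  imports Defs
begin


lemma Ient_nonneg:
  assumes "0 < p" "p < 1" "0 \<le> x" "x \<le> 1"
  shows "Ient p x \<ge> 0"
proof -
  have h1: "x * ln (x / p) \<ge> x - p"
  proof (cases "x = 0")
    case True then show ?thesis using assms by simp
  next
    case False
    then have "x > 0" using assms by simp
    have a: "ln (p/x) \<le> p/x - 1" using ln_le_minus_one[of "p/x"] \<open>x>0\<close> assms by simp
    have "ln (x/p) = - ln (p/x)" using \<open>x>0\<close> assms by (simp add: ln_div)
    then have "ln (x/p) \<ge> 1 - p/x" using a by linarith
    then have "x * ln (x/p) \<ge> x * (1 - p/x)" using \<open>x>0\<close> by (simp add: mult_left_mono)
    moreover have "x * (1 - p/x) = x - p" using \<open>x>0\<close> by (simp add: field_simps)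
    ultimately show ?thesis by linarith
  qed
  have h2: "(1-x) * ln ((1-x) / (1-p)) \<ge> (1-x) - (1-p)"
  proof (cases "x = 1")
    case True then show ?thesis using assms by simp
  next
    case False
    then have "1-x > 0" using assms by simp
    have a: "ln ((1-p)/(1-x)) \<le> (1-p)/(1-x) - 1" using ln_le_minus_one[of "(1-p)/(1-x)"] \<open>1-x>0\<close> assms by simp
    have "ln ((1-x)/(1-p)) = - ln ((1-p)/(1-x))" using \<open>1-x>0\<close> assms by (simp add: ln_div)
    then have "ln ((1-x)/(1-p)) \<ge> 1 - (1-p)/(1-x)" using a by linarith
    then have "(1-x) * ln ((1-x)/(1-p)) \<ge> (1-x) * (1 - (1-p)/(1-x))" using \<open>1-x>0\<close> by (simp add: mult_left_mono)
    moreover have "(1-x) * (1 - (1-p)/(1-x)) = (1-x) - (1-p)" using \<open>1-x>0\<close> by (simp add: field_simps)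
    ultimately show ?thesis by linarith
  qed
  show ?thesis unfolding Ient_def using h1 h2 by linarith
qed

lemma Ient_p: "0 < p \<Longrightarrow> p < 1 \<Longrightarrow> Ient p p = 0"
  by (simp add: Ient_def)

lemma Ient_1: "0 < p \<Longrightarrow> p < 1 \<Longrightarrow> Ient p 1 = ln (1 / p)"
  by (simp add: Ient_def)

lemma Ient_mat_nonneg:
  assumes "0 < p" "p < 1" "Q \<in> Qset n"
  shows "Ient_mat p n Q \<ge> 0"
  unfolding Ient_mat_def using assms Ient_nonneg[of p]
  by (auto simp: Qset_def intro!: sum_nonneg)

lemma Phi_le:
  assumes "0 < p" "p < 1" "Q \<in> Qset n" "hom_density E n Q \<ge> (1 + \<delta>) * p ^ card E"
  shows "Phi E n p \<delta> \<le> Ient_mat p n Q"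
  unfolding Phi_def
  apply (rule cInf_lower)
  using assms apply blast
  unfolding bdd_below_def using Ient_mat_nonneg[OF assms(1,2)] by blast


lemma inj_count:
  assumes "finite F" "\<And>v. finite (T v)"
  shows "(\<Prod>v\<in>F. (card (T v) - card F)) \<le> card {\<phi> \<in> PiE F T. inj_on \<phi> F}"
  using assms(1)
proof (induction F rule: finite_induct)
  case empty
  then show ?case by simp
next
  case (insert a F)
  define G where "G = {\<phi> \<in> PiE F T. inj_on \<phi> F}"
  define G' where "G' = {\<phi> \<in> PiE (insert a F) T. inj_on \<phi> (insert a F)}"
  define Sg where "Sg = Sigma G (\<lambda>\<phi>. T a - \<phi> ` F)"
  define h where "h = (\<lambda>(\<phi>::'a\<Rightarrow>'b, x). \<phi>(a := x))"
  have finG: "finite G" unfolding G_def using finite_PiE[OF insert(1), of T] assms(2) by auto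
  have finG': "finite G'" unfolding G'_def using finite_PiE[of "insert a F" T] insert(1) assms(2) by auto
  have inj: "inj_on h Sg"
  proof (rule inj_onI)
    fix u w assume u: "u \<in> Sg" and w: "w \<in> Sg" and eq: "h u = h w"
    obtain \<phi> x where u': "u = (\<phi>, x)" by fastforce
    obtain \<psi> y where w': "w = (\<psi>, y)" by fastforce
    have "\<phi> \<in> PiE F T" "\<psi> \<in> PiE F T" using u w u' w' unfolding Sg_def G_def by auto
    then have "\<phi> a = undefined" "\<psi> a = undefined" using insert(2) by (auto simp: PiE_def extensional_def)
    moreover have "\<phi>(a:=x) = \<psi>(a:=y)" using eq u' w' h_def by simp
    ultimately have "\<phi> = \<psi>" "x = y"
      by (metis fun_upd_triv fun_upd_upd, metis fun_upd_same)
    then show "u = w" using u' w' by simp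
  qed
  have img: "h ` Sg \<subseteq> G'"
  proof
    fix z assume "z \<in> h ` Sg"
    then obtain \<phi> x where "\<phi> \<in> G" "x \<in> T a - \<phi> ` F" "z = \<phi>(a:=x)" unfolding Sg_def h_def by auto
    then show "z \<in> G'" unfolding G_def G'_def using insert(2)
      by (auto simp: PiE_def extensional_def inj_on_def)
  qed
  have c1: "card Sg \<le> card G'" using card_inj_on_le[OF inj img finG'] .
  have c2: "card Sg = (\<Sum>\<phi>\<in>G. card (T a - \<phi> ` F))"
    unfolding Sg_def using finG assms(2) by (simp add: card_SigmaI)
  have c3: "card (T a) - card F \<le> card (T a - \<phi> ` F)" for \<phi>
  proof -
    have "card (T a) - card F \<le> card (T a) - card (\<phi> ` F)" using card_image_le[OF insert(1), of \<phi>] by (simp add: diff_le_mono2)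
    also have "\<dots> \<le> card (T a - \<phi> ` F)" using diff_card_le_card_Diff insert(1) by blast
    finally show ?thesis .
  qed
  have "card G * (card (T a) - card F) \<le> card Sg"
    unfolding c2 using sum_mono[of G "\<lambda>_. card (T a) - card F" "\<lambda>\<phi>. card (T a - \<phi> ` F)"] c3 by simp
  have "(\<Prod>v\<in>insert a F. (card (T v) - card (insert a F)))
      = (card (T a) - card (insert a F)) * (\<Prod>v\<in>F. (card (T v) - card (insert a F)))"
    using insert by simp
  also have "\<dots> \<le> (card (T a) - card F) * (\<Prod>v\<in>F. (card (T v) - card F))"
    apply (rule mult_mono) apply (simp add: insert)
     apply (rule prod_mono) using insert by auto
  also have "\<dots> \<le> (card (T a) - card F) * card G" using insert.IH G_def by simp
  also have "\<dots> \<le> card G'" using \<open>card G * _ \<le> card Sg\<close> c1 by (simp add: mult.commute)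
  finally show ?case unfolding G'_def .
qed


lemma hom_lower:
  fixes E :: "('v::finite \<times> 'v) set" and M :: "'i \<Rightarrow> ('v \<Rightarrow> nat) set"
  assumes "finite I" "\<forall>i\<in>I. \<forall>j\<in>I. i \<noteq> j \<longrightarrow> M i \<inter> M j = {}"
    "\<forall>i\<in>I. M i \<subseteq> PiE UNIV (\<lambda>_. {..<n})"
    "\<forall>i\<in>I. \<forall>\<phi>\<in>M i. w i \<le> (\<Prod>e\<in>E. Q (\<phi> (fst e)) (\<phi> (snd e)))"
    "\<forall>i<n. \<forall>j<n. 0 \<le> Q i j"
  shows "(\<Sum>i\<in>I. real (card (M i)) * w i) / real n ^ card (UNIV::'v set) \<le> hom_density E n Q"
proof -
  let ?P = "PiE (UNIV::'v set) (\<lambda>_. {..<n})"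
  let ?f = "\<lambda>\<phi>. \<Prod>e\<in>E. Q (\<phi> (fst e)) (\<phi> (snd e))"
  have finP: "finite ?P" by (simp add: finite_PiE)
  have finM: "\<forall>i\<in>I. finite (M i)" using assms(3) finP finite_subset by blast
  have "(\<Sum>i\<in>I. real (card (M i)) * w i) \<le> (\<Sum>i\<in>I. \<Sum>\<phi>\<in>M i. ?f \<phi>)"
  proof (rule sum_mono)
    fix i assume i: "i \<in> I"
    have "real (card (M i)) * w i = (\<Sum>\<phi>\<in>M i. w i)" by simp
    also have "\<dots> \<le> (\<Sum>\<phi>\<in>M i. ?f \<phi>)" using assms(4) i by (intro sum_mono) auto
    finally show "real (card (M i)) * w i \<le> (\<Sum>\<phi>\<in>M i. ?f \<phi>)" .
  qed
  also have "\<dots> = (\<Sum>\<phi>\<in>(\<Union>(M ` I)). ?f \<phi>)"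
    using sum.UNION_disjoint[OF assms(1) finM assms(2), of ?f] by simp
  also have "\<dots> \<le> (\<Sum>\<phi>\<in>?P. ?f \<phi>)"
  proof (rule sum_mono2[OF finP])
    show "\<Union>(M ` I) \<subseteq> ?P" using assms(3) by blast
    fix \<phi> assume "\<phi> \<in> ?P - \<Union>(M ` I)"
    then have "\<forall>v. \<phi> v < n" by (auto simp: PiE_def Pi_def)
    then show "0 \<le> ?f \<phi>" using assms(5) by (intro prod_nonneg) auto
  qed
  finally have "(\<Sum>i\<in>I. real (card (M i)) * w i) \<le> (\<Sum>\<phi>\<in>?P. ?f \<phi>)" .
  then show ?thesis unfolding hom_density_def by (simp add: divide_right_mono)
qed

lemma card_fst_in:
  fixes E :: "('v::finite \<times> 'v) set"
  shows "card {e\<in>E. fst e \<in> S} = (\<Sum>v\<in>S. outdeg E v)"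
proof -
  have "{e\<in>E. fst e \<in> S} = Sigma S (\<lambda>v. {u. (v,u) \<in> E})" by auto
  then show ?thesis unfolding outdeg_def by (simp add: card_SigmaI)
qed

lemma card_snd_in:
  fixes E :: "('v::finite \<times> 'v) set"
  shows "card {e\<in>E. snd e \<in> S} = (\<Sum>v\<in>S. indeg E v)"
proof -
  have "{e\<in>E. snd e \<in> S} = (\<lambda>(a,b). (b,a)) ` Sigma S (\<lambda>v. {u. (u,v) \<in> E})" by force
  moreover have "inj_on (\<lambda>(a::'v,b::'v). (b,a)) X" for X by (auto simp: inj_on_def)
  ultimately show ?thesis unfolding indeg_def by (simp add: card_image card_SigmaI)
qed

lemma card_incident:
  fixes E :: "('v::finite \<times> 'v) set"
  assumes "\<forall>u\<in>S. \<forall>v\<in>S. (u, v) \<notin> E"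
  shows "card {e\<in>E. fst e \<in> S \<or> snd e \<in> S} = (\<Sum>v\<in>S. deg E v)"
proof -
  have "{e\<in>E. fst e \<in> S \<or> snd e \<in> S} = {e\<in>E. fst e \<in> S} \<union> {e\<in>E. snd e \<in> S}" by auto
  moreover have "{e\<in>E. fst e \<in> S} \<inter> {e\<in>E. snd e \<in> S} = {}" using assms by auto
  ultimately have "card {e\<in>E. fst e \<in> S \<or> snd e \<in> S} = card {e\<in>E. fst e \<in> S} + card {e\<in>E. snd e \<in> S}"
    by (simp add: card_Un_disjoint)
  then show ?thesis by (simp add: card_fst_in card_snd_in deg_def sum.distrib)
qed

lemma card_incident_le:
  fixes E :: "('v::finite \<times> 'v) set"
  shows "card {e\<in>E. fst e \<in> S \<or> snd e \<in> S} \<le> (\<Sum>v\<in>S. deg E v)"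
proof -
  have "{e\<in>E. fst e \<in> S \<or> snd e \<in> S} = {e\<in>E. fst e \<in> S} \<union> {e\<in>E. snd e \<in> S}" by auto
  then have "card {e\<in>E. fst e \<in> S \<or> snd e \<in> S} \<le> card {e\<in>E. fst e \<in> S} + card {e\<in>E. snd e \<in> S}"
    by (simp add: card_Un_le)
  then show ?thesis by (simp add: card_fst_in card_snd_in deg_def sum.distrib)
qed

lemma deg_le_maxdeg:
  fixes E :: "('v::finite \<times> 'v) set"
  shows "deg E v \<le> maxdeg E"
  unfolding maxdeg_def by (rule Max_ge) auto

lemma maxdeg_attained:
  fixes E :: "('v::finite \<times> 'v) set"
  shows "\<exists>v. deg E v = maxdeg E"
proof -
  have "maxdeg E \<in> range (deg E)" unfolding maxdeg_def by (rule Max_in) auto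
  then show ?thesis by auto
qed

lemma two_card_E:
  fixes E :: "('v::finite \<times> 'v) set"
  assumes "regular E d"
  shows "2 * card E = card (UNIV::'v set) * d"
proof -
  have "card E = card {e\<in>E. fst e \<in> UNIV}" by simp
  also have "\<dots> = (\<Sum>v\<in>UNIV. outdeg E v)" by (rule card_fst_in)
  finally have a: "card E = (\<Sum>v\<in>UNIV. outdeg E v)" .
  have "card E = card {e\<in>E. snd e \<in> UNIV}" by simp
  also have "\<dots> = (\<Sum>v\<in>UNIV. indeg E v)" by (rule card_snd_in)
  finally have b: "card E = (\<Sum>v\<in>UNIV. indeg E v)" .
  have "2 * card E = (\<Sum>v\<in>UNIV. deg E v)" using a b by (simp add: deg_def sum.distrib)
  also have "\<dots> = card (UNIV::'v set) * d" using assms by (simp add: regular_def)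
  finally show ?thesis .
qed


lemma lim_ceil:
  assumes "\<forall>\<^sub>F n in sequentially. 0 < r n" "(\<lambda>n. 1 / r n) \<longlonglongrightarrow> 0" "0 \<le> c"
  shows "(\<lambda>n. real (nat \<lceil>c * r n\<rceil> - k) / r n) \<longlonglongrightarrow> c"
proof (rule tendsto_sandwich[of "\<lambda>n. c - real k * (1 / r n)" _ _ "\<lambda>n. c + 1 / r n"])
  show "\<forall>\<^sub>F n in sequentially. c - real k * (1 / r n) \<le> real (nat \<lceil>c * r n\<rceil> - k) / r n"
    using assms(1)
  proof eventually_elim
    case (elim n)
    have "c * r n - real k \<le> real (nat \<lceil>c * r n\<rceil> - k)"
    proof -
      have "c * r n \<le> real (nat \<lceil>c * r n\<rceil>)" by linarith
      moreover have "real (nat \<lceil>c * r n\<rceil>) - real k \<le> real (nat \<lceil>c * r n\<rceil> - k)" by linarith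
      ultimately show ?thesis by linarith
    qed
    then have "(c * r n - real k) / r n \<le> real (nat \<lceil>c * r n\<rceil> - k) / r n"
      using elim by (simp add: divide_right_mono)
    moreover have "(c * r n - real k) / r n = c - real k * (1 / r n)" using elim by (simp add: field_simps)
    ultimately show ?case by simp
  qed
  show "\<forall>\<^sub>F n in sequentially. real (nat \<lceil>c * r n\<rceil> - k) / r n \<le> c + 1 / r n"
    using assms(1)
  proof eventually_elim
    case (elim n)
    have "real (nat \<lceil>c * r n\<rceil> - k) \<le> c * r n + 1"
    proof -
      have "c * r n \<ge> 0" using elim assms(3) by simp
      then have "real (nat \<lceil>c * r n\<rceil>) \<le> c * r n + 1" by linarith
      moreover have "real (nat \<lceil>c * r n\<rceil> - k) \<le> real (nat \<lceil>c * r n\<rceil>)" by simp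
      ultimately show ?thesis by linarith
    qed
    then have "real (nat \<lceil>c * r n\<rceil> - k) / r n \<le> (c * r n + 1) / r n"
      using elim by (simp add: divide_right_mono)
    moreover have "(c * r n + 1) / r n = c + 1 / r n" using elim by (simp add: field_simps)
    ultimately show ?case by simp
  qed
  show "(\<lambda>n. c - real k * (1 / r n)) \<longlonglongrightarrow> c"
    using tendsto_diff[OF tendsto_const tendsto_mult[OF tendsto_const assms(2)], of c "real k"] by simp
  show "(\<lambda>n. c + 1 / r n) \<longlonglongrightarrow> c"
    using tendsto_add[OF tendsto_const assms(2), of c] by simp
qed

lemma lim_floor:
  assumes "(\<lambda>n. real (a n) / real n) \<longlonglongrightarrow> 0" "\<forall>\<^sub>F n in sequentially. a n \<le> n" "0 \<le> y"
  shows "(\<lambda>n. real (nat \<lfloor>y * real (n - a n)\<rfloor> - k) / real n) \<longlonglongrightarrow> y"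
proof (rule tendsto_sandwich[of "\<lambda>n. y - y * (real (a n) / real n) - (1 + real k) * (1 / real n)" _ _ "\<lambda>n. y"])
  have ev: "\<forall>\<^sub>F n in sequentially. a n \<le> n \<and> n > 0" using assms(2) eventually_gt_at_top[of 0]
    by eventually_elim auto
  show "\<forall>\<^sub>F n in sequentially. y - y * (real (a n) / real n) - (1 + real k) * (1 / real n)
      \<le> real (nat \<lfloor>y * real (n - a n)\<rfloor> - k) / real n"
    using ev
  proof eventually_elim
    case (elim n)
    have "real (n - a n) = real n - real (a n)" using elim by simp
    have "y * real (n - a n) - 1 - real k \<le> real (nat \<lfloor>y * real (n - a n)\<rfloor> - k)"
    proof -
      have "y * real (n - a n) - 1 \<le> real (nat \<lfloor>y * real (n - a n)\<rfloor>)" by linarith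
      moreover have "real (nat \<lfloor>y * real (n - a n)\<rfloor>) - real k \<le> real (nat \<lfloor>y * real (n - a n)\<rfloor> - k)" by linarith
      ultimately show ?thesis by linarith
    qed
    then have "(y * real (n - a n) - 1 - real k) / real n \<le> real (nat \<lfloor>y * real (n - a n)\<rfloor> - k) / real n"
      by (simp add: divide_right_mono)
    moreover have "(y * real (n - a n) - 1 - real k) / real n = y - y * (real (a n) / real n) - (1 + real k) * (1 / real n)"
      using elim \<open>real (n - a n) = real n - real (a n)\<close> by (simp add: field_simps)
    ultimately show ?case by simp
  qed
  show "\<forall>\<^sub>F n in sequentially. real (nat \<lfloor>y * real (n - a n)\<rfloor> - k) / real n \<le> y"
    using ev
  proof eventually_elim
    case (elim n)
    have "real (nat \<lfloor>y * real (n - a n)\<rfloor> - k) \<le> y * real n"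
    proof -
      have "y * real (n - a n) \<le> y * real n" using assms(3) by (simp add: mult_left_mono)
      moreover have "y * real (n - a n) \<ge> 0" using assms(3) by simp
      ultimately have "real (nat \<lfloor>y * real (n - a n)\<rfloor>) \<le> y * real n" by linarith
      moreover have "real (nat \<lfloor>y * real (n - a n)\<rfloor> - k) \<le> real (nat \<lfloor>y * real (n - a n)\<rfloor>)" by simp
      ultimately show ?thesis by linarith
    qed
    then show ?case using elim by (simp add: divide_le_eq)
  qed
  have "(\<lambda>n. 1 / real n) \<longlonglongrightarrow> 0" using lim_const_over_n[of 1] by simp
  then show "(\<lambda>n. y - y * (real (a n) / real n) - (1 + real k) * (1 / real n)) \<longlonglongrightarrow> y"
    using tendsto_diff[OF tendsto_diff[OF tendsto_const tendsto_mult[OF tendsto_const assms(1)]]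
        tendsto_mult[OF tendsto_const]] by fastforce
  show "(\<lambda>n. y) \<longlonglongrightarrow> y" by simp
qed

lemma no_const_smallo:
  fixes p :: "nat \<Rightarrow> real"
  assumes "\<forall>\<^sub>F n in sequentially. 0 < p n" "p \<longlonglongrightarrow> 0" "(\<lambda>n. 1) \<in> o(p)"
  shows False
proof -
  have a: "(\<lambda>n. 1 / p n) \<longlonglongrightarrow> 0" using smalloD_tendsto[OF assms(3)] by simp
  have "(\<lambda>n. p n * (1 / p n)) \<longlonglongrightarrow> 0 * 0" by (rule tendsto_mult[OF assms(2) a])
  moreover have "\<forall>\<^sub>F n in sequentially. p n * (1 / p n) = 1" using assms(1) by eventually_elim force
  ultimately have "(\<lambda>n. 1::real) \<longlonglongrightarrow> 0" using Lim_transform_eventually by fastforce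
  then show False using LIMSEQ_unique[OF _ tendsto_const[of "1::real"]] by force
qed

lemma Delta_pos:
  fixes p :: "nat \<Rightarrow> real"
  assumes "\<forall>\<^sub>F n in sequentially. 0 < p n" "p \<longlonglongrightarrow> 0" "(\<lambda>n. real n powr (- c / real D)) \<in> o(p)"
  shows "D > 0"
proof (rule ccontr)
  assume "\<not> D > 0"
  then have "D = 0" by simp
  have "\<forall>\<^sub>F n in sequentially. real n powr (- c / real D) = 1"
    using eventually_gt_at_top[of "0::nat"] by eventually_elim (simp add: \<open>D = 0\<close>)
  then have "(\<lambda>n. 1) \<in> o(p)" using assms(3) landau_o.small.in_cong[of "\<lambda>n. real n powr (- c / real D)" "\<lambda>n. 1" sequentially p] by simp
  then show False using no_const_smallo assms by blast
qed


lemma hyp_conv: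
  fixes p :: "nat \<Rightarrow> real"
  assumes "\<forall>\<^sub>F n in sequentially. 0 < p n" "(\<lambda>n. real n powr (- c / real D)) \<in> o(p)" "c > 0" "D > 0"
  shows "(\<lambda>n. 1 / (real n * p n powr (real D / c))) \<longlonglongrightarrow> 0"
proof -
  let ?h = "\<lambda>n. real n powr (- c / real D) / p n"
  have h0: "?h \<longlonglongrightarrow> 0" using smalloD_tendsto[OF assms(2)] .
  have "(\<lambda>n. ?h n powr (real D / c)) \<longlonglongrightarrow> 0"
    apply (rule tendsto_zero_powrI[OF h0 tendsto_const])
    using assms(1) apply eventually_elim apply simp
    using assms by simp
  moreover have "\<forall>\<^sub>F n in sequentially. ?h n powr (real D / c) = 1 / (real n * p n powr (real D / c))"
    using assms(1) eventually_gt_at_top[of "0::nat"]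
  proof eventually_elim
    case (elim n)
    have "?h n powr (real D / c) = (real n powr (- c / real D)) powr (real D / c) / p n powr (real D / c)"
      by (simp add: powr_divide elim)
    also have "(real n powr (- c / real D)) powr (real D / c) = real n powr (-1)"
      using assms(3,4) by (simp add: powr_powr)
    finally show ?case using elim by (simp add: powr_minus_divide)
  qed
  ultimately show ?thesis using Lim_transform_eventually by fastforce
qed


definition fterm :: "('v \<times> 'v) set \<Rightarrow> 'v set \<Rightarrow> real \<Rightarrow> real \<Rightarrow> real \<Rightarrow> real \<Rightarrow> real" where
  "fterm E S x1 x2 y1 y2 =
        x1 ^ vplus E S * x2 ^ vminus E S * (min x1 x2) ^ vpm E S
        * y1 ^ card (Nplus E S - Nminus E S) * y2 ^ card (Nminus E S - Nplus E S)
        * (min y1 y2) ^ card (Nplus E S \<inter> Nminus E S)"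

lemma fbar_fterm: "fbar E x1 x2 y1 y2 = (\<Sum>S\<in>indep_sets E. fterm E S x1 x2 y1 y2)"
  unfolding fbar_def fterm_def ..

lemma finite_indep: "finite (indep_sets (E :: ('v::finite \<times> 'v) set))"
  by simp

lemma empty_indep: "{} \<in> indep_sets E"
  unfolding indep_sets_def by simp

lemma fterm_empty: "fterm E {} x1 x2 y1 y2 = 1"
  unfolding fterm_def vplus_def vminus_def vpm_def Nplus_def Nminus_def by simp

lemma fterm_nonneg: "0 \<le> x1 \<Longrightarrow> 0 \<le> x2 \<Longrightarrow> 0 \<le> y1 \<Longrightarrow> 0 \<le> y2 \<Longrightarrow> 0 \<le> fterm E S x1 x2 y1 y2"
  unfolding fterm_def by simp

lemma fbar_split:
  fixes E :: "('v::finite \<times> 'v) set"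
  shows "fbar E x1 x2 y1 y2 = 1 + (\<Sum>S\<in>indep_sets E - {{}}. fterm E S x1 x2 y1 y2)"
  unfolding fbar_fterm using sum.remove[OF finite_indep empty_indep, of "\<lambda>S. fterm E S x1 x2 y1 y2"]
  by (simp add: fterm_empty)

lemma xexp_pos:
  fixes E :: "('v::finite \<times> 'v) set"
  assumes "S \<noteq> {}"
  shows "vplus E S + vminus E S + vpm E S \<ge> 1"
proof -
  obtain v where v: "v \<in> S" using assms by blast
  consider "\<not> (\<exists>u. (u, v) \<in> E)" | "\<not> (\<exists>u. (v, u) \<in> E)" | "(\<exists>u. (u, v) \<in> E) \<and> (\<exists>u. (v, u) \<in> E)" by blast
  then show ?thesis
  proof cases
    case 1
    then have "{v\<in>S. \<not> (\<exists>u. (u, v) \<in> E)} \<noteq> {}" using v by blast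
    then have "vplus E S \<noteq> 0" unfolding vplus_def by simp
    then show ?thesis by simp
  next
    case 2
    then have "{v\<in>S. \<not> (\<exists>u. (v, u) \<in> E)} \<noteq> {}" using v by blast
    then have "vminus E S \<noteq> 0" unfolding vminus_def by simp
    then show ?thesis by simp
  next
    case 3
    then have "{v\<in>S. (\<exists>u. (u, v) \<in> E) \<and> (\<exists>u. (v, u) \<in> E)} \<noteq> {}" using v by blast
    then have "vpm E S \<noteq> 0" unfolding vpm_def by simp
    then show ?thesis by simp
  qed
qed

lemma min_scale: "0 \<le> (l::real) \<Longrightarrow> min (l * x1) (l * x2) = l * min x1 x2"
proof (cases "x1 \<le> x2")
  case True
  assume "0 \<le> l"
  then have "l * x1 \<le> l * x2" using True by (simp add: mult_left_mono)
  then show ?thesis using True by (simp add: min_def)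
next
  case False
  assume "0 \<le> l"
  then have "l * x2 \<le> l * x1" using False by (simp add: mult_left_mono)
  then show ?thesis using False by (simp add: min_def)
qed

lemma fterm_xscale:
  "0 \<le> l \<Longrightarrow> fterm E S (l * x1) (l * x2) y1 y2 = l ^ (vplus E S + vminus E S + vpm E S) * fterm E S x1 x2 y1 y2"
  unfolding fterm_def by (simp add: power_add power_mult_distrib min_scale)

lemma card_N_split:
  fixes A B :: "'v::finite set"
  shows "card (A \<union> B) = card (A - B) + card (B - A) + card (A \<inter> B)"
proof -
  have "A \<union> B = (A - B) \<union> ((B - A) \<union> (A \<inter> B))" by blast
  moreover have "(A - B) \<inter> ((B - A) \<union> (A \<inter> B)) = {}" by blast
  moreover have "(B - A) \<inter> (A \<inter> B) = {}" by blast
  ultimately show ?thesis by (metis card_Un_disjoint finite add.assoc)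
qed

lemma fterm_yscale:
  fixes E :: "('v::finite \<times> 'v) set"
  assumes "0 < m"
  shows "fterm E S x1 x2 (y1 / m) (y2 / m) = (1/m) ^ card (Nplus E S \<union> Nminus E S) * fterm E S x1 x2 y1 y2"
proof -
  have c: "card (Nplus E S \<union> Nminus E S) = card (Nplus E S - Nminus E S) + card (Nminus E S - Nplus E S) + card (Nplus E S \<inter> Nminus E S)"
    by (rule card_N_split)
  have mn: "min (y1 / m) (y2 / m) = min y1 y2 * (1/m)" using assms by (simp add: min_divide_distrib_right)
  show ?thesis unfolding fterm_def c mn using assms
    by (simp add: power_add power_mult_distrib field_simps)
qed


lemma maxdeg_pos:
  fixes E :: "('v::finite \<times> 'v) set"
  assumes "E \<noteq> {}"
  shows "maxdeg E > 0"
proof -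
  obtain u v where uv: "(u, v) \<in> E" using assms by auto
  have "outdeg E u > 0" unfolding outdeg_def using uv by (auto simp: card_gt_0_iff)
  then have "deg E u > 0" by (simp add: deg_def)
  then show ?thesis using deg_le_maxdeg[of E u] by simp
qed

lemma indep_deg: "S \<in> indep_sets E \<Longrightarrow> v \<in> S \<Longrightarrow> deg E v = maxdeg E"
  unfolding indep_sets_def by auto

lemma indep_noedge: "S \<in> indep_sets E \<Longrightarrow> u \<in> S \<Longrightarrow> v \<in> S \<Longrightarrow> (u, v) \<notin> E"
  unfolding indep_sets_def by auto

lemma nonisolated:
  fixes E :: "('v::finite \<times> 'v) set"
  assumes "S \<in> indep_sets E" "maxdeg E > 0" "v \<in> S"
  shows "(\<exists>u. (u, v) \<in> E) \<or> (\<exists>u. (v, u) \<in> E)"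
proof (rule ccontr)
  assume "\<not> ?thesis"
  then have "indeg E v = 0" "outdeg E v = 0" unfolding indeg_def outdeg_def by auto
  then have "deg E v = 0" by (simp add: deg_def)
  then show False using indep_deg[OF assms(1,3)] assms(2) by simp
qed

lemma xexp_eq:
  fixes E :: "('v::finite \<times> 'v) set"
  assumes "S \<in> indep_sets E" "maxdeg E > 0"
  shows "vplus E S + vminus E S + vpm E S = card S"
proof -
  let ?A = "{v\<in>S. \<not> (\<exists>u. (u, v) \<in> E)}"
  let ?B = "{v\<in>S. \<not> (\<exists>u. (v, u) \<in> E)}"
  let ?C = "{v\<in>S. (\<exists>u. (u, v) \<in> E) \<and> (\<exists>u. (v, u) \<in> E)}"
  have "S = ?A \<union> (?B \<union> ?C)" by blast
  moreover have "?A \<inter> (?B \<union> ?C) = {}" using nonisolated[OF assms] by blast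
  moreover have "?B \<inter> ?C = {}" by blast
  ultimately have "card S = card ?A + (card ?B + card ?C)"
    using card_Un_disjoint[of ?A "?B \<union> ?C"] card_Un_disjoint[of ?B ?C] by simp
  then show ?thesis unfolding vplus_def vminus_def vpm_def by simp
qed

lemma card_incident_S:
  fixes E :: "('v::finite \<times> 'v) set"
  assumes "S \<in> indep_sets E"
  shows "card {e\<in>E. fst e \<in> S \<or> snd e \<in> S} = maxdeg E * card S"
proof -
  have "card {e\<in>E. fst e \<in> S \<or> snd e \<in> S} = (\<Sum>v\<in>S. deg E v)"
    using card_incident[of S E] assms unfolding indep_sets_def by blast
  also have "\<dots> = (\<Sum>v\<in>S. maxdeg E)" using indep_deg[OF assms] by simp
  finally show ?thesis by simp
qed

lemma card_S_le_N:
  fixes E :: "('v::finite \<times> 'v) set"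
  assumes "S \<in> indep_sets E" "maxdeg E > 0"
  shows "card S \<le> card (Nplus E S \<union> Nminus E S)"
proof -
  let ?N = "Nplus E S \<union> Nminus E S"
  have sub: "{e\<in>E. fst e \<in> S \<or> snd e \<in> S} \<subseteq> {e\<in>E. fst e \<in> ?N \<or> snd e \<in> ?N}"
  proof
    fix e assume e: "e \<in> {e\<in>E. fst e \<in> S \<or> snd e \<in> S}"
    obtain a b where ab: "e = (a, b)" by fastforce
    show "e \<in> {e\<in>E. fst e \<in> ?N \<or> snd e \<in> ?N}"
    proof (cases "a \<in> S")
      case True
      then have "b \<notin> S" using indep_noedge[OF assms(1)] e ab by auto
      then have "b \<in> Nplus E S" using True e ab unfolding Nplus_def by auto
      then show ?thesis using e ab by auto
    next
      case False
      then have "b \<in> S" using e ab by auto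
      then have "a \<in> Nminus E S" using False e ab unfolding Nminus_def by auto
      then show ?thesis using e ab by auto
    qed
  qed
  have "maxdeg E * card S = card {e\<in>E. fst e \<in> S \<or> snd e \<in> S}" using card_incident_S[OF assms(1)] by simp
  also have "\<dots> \<le> card {e\<in>E. fst e \<in> ?N \<or> snd e \<in> ?N}" by (rule card_mono[OF _ sub]) simp
  also have "\<dots> \<le> (\<Sum>v\<in>?N. deg E v)" by (rule card_incident_le)
  also have "\<dots> \<le> (\<Sum>v\<in>?N. maxdeg E)" by (rule sum_mono) (simp add: deg_le_maxdeg)
  also have "\<dots> = maxdeg E * card ?N" by simp
  finally show ?thesis using assms(2) by simp
qed

lemma fterm_x0:
  fixes E :: "('v::finite \<times> 'v) set"
  assumes "S \<noteq> {}"
  shows "fterm E S 0 0 y1 y2 = 0"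
  using fterm_xscale[of 0 E S 1 1 y1 y2] xexp_pos[OF assms, of E] by (simp add: power_0_left)

lemma fbar_x0:
  fixes E :: "('v::finite \<times> 'v) set"
  shows "fbar E 0 0 y1 y2 = 1"
proof -
  have "\<forall>S\<in>indep_sets E - {{}}. fterm E S 0 0 y1 y2 = 0" using fterm_x0 by blast
  then show ?thesis using fbar_split[of E 0 0 y1 y2] by simp
qed

lemma zero3: "c1 \<noteq> 0 \<or> c2 \<noteq> 0 \<or> c3 \<noteq> 0 \<Longrightarrow> (a::real) * b * c * 0 ^ c1 * 0 ^ c2 * (min 0 0) ^ c3 = 0"
  by (elim disjE) (simp_all add: power_0_left)

lemma fterm_y0:
  fixes E :: "('v::finite \<times> 'v) set"
  assumes "S \<in> indep_sets E" "maxdeg E > 0" "S \<noteq> {}"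
  shows "fterm E S x1 x2 0 0 = 0"
proof -
  have "card S \<ge> 1" using assms(3) by (simp add: Suc_le_eq card_gt_0_iff)
  then have "card (Nplus E S \<union> Nminus E S) \<ge> 1" using card_S_le_N[OF assms(1,2)] by simp
  moreover have "card (Nplus E S \<union> Nminus E S) = card (Nplus E S - Nminus E S) + card (Nminus E S - Nplus E S) + card (Nplus E S \<inter> Nminus E S)"
    by (rule card_N_split)
  ultimately have "card (Nplus E S - Nminus E S) \<noteq> 0 \<or> card (Nminus E S - Nplus E S) \<noteq> 0 \<or> card (Nplus E S \<inter> Nminus E S) \<noteq> 0"
    by linarith
  then show ?thesis unfolding fterm_def by (rule zero3)
qed

lemma fbar_y0:
  fixes E :: "('v::finite \<times> 'v) set"
  assumes "maxdeg E > 0"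
  shows "fbar E x1 x2 0 0 = 1"
proof -
  have "\<forall>S\<in>indep_sets E - {{}}. fterm E S x1 x2 0 0 = 0" using fterm_y0[OF _ assms] by blast
  then show ?thesis using fbar_split[of E x1 x2 0 0] by simp
qed

lemma fterm_Eempty: "fterm {} S x1 x2 y1 y2 = (x1 * x2) ^ card S"
proof -
  have a: "vplus {} S = card S" unfolding vplus_def by simp
  have b: "vminus {} S = card S" unfolding vminus_def by simp
  have c: "vpm {} S = 0" unfolding vpm_def by simp
  have d: "Nplus {} S = {}" "Nminus {} S = {}" unfolding Nplus_def Nminus_def by simp_all
  show ?thesis unfolding fterm_def a b c d by (simp add: power_mult_distrib)
qed

lemma fbar_empty:
  fixes E :: "('v::finite \<times> 'v) set"
  assumes "E = {}"
  shows "fbar E x1 x2 y1 y2 = (\<Sum>S\<in>indep_sets E. (x1 * x2) ^ card S)"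
  unfolding fbar_fterm assms fterm_Eempty ..


lemma isCont_fbar_x:
  fixes E :: "('v::finite \<times> 'v) set"
  shows "isCont (\<lambda>t. fbar E (t * a) (t * b) c d) t"
proof -
  have "isCont (\<lambda>t. fterm E S (t * a) (t * b) c d) t" for S
    unfolding fterm_def
    by (intro isCont_mult isCont_power continuous_min continuous_ident continuous_const) 
  then show ?thesis unfolding fbar_fterm by (intro isCont_sum) auto
qed


lemma fbar_scale_ge:
  fixes E :: "('v::finite \<times> 'v) set"
  assumes "maxdeg E > 0" "0 < m" "m \<le> 1" "0 \<le> x1" "0 \<le> x2" "0 \<le> y1" "0 \<le> y2"
  shows "fbar E x1 x2 y1 y2 \<le> fbar E (m * x1) (m * x2) (y1 / m) (y2 / m)"
  unfolding fbar_fterm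
proof (rule sum_mono)
  fix S assume S: "S \<in> indep_sets E"
  let ?N = "card (Nplus E S \<union> Nminus E S)"
  have eq: "fterm E S (m * x1) (m * x2) (y1 / m) (y2 / m) = ((1/m) ^ ?N * m ^ card S) * fterm E S x1 x2 y1 y2"
    using fterm_yscale[OF assms(2), of E S "m*x1" "m*x2" y1 y2] fterm_xscale[of m E S x1 x2 y1 y2]
      xexp_eq[OF S assms(1)] assms(2) by simp
  have "(1/m) ^ card S \<le> (1/m) ^ ?N"
    using card_S_le_N[OF S assms(1)] assms(2,3) by (intro power_increasing) auto
  moreover have "(1/m) ^ card S * m ^ card S = 1" using assms(2) by (simp add: power_one_over field_simps)
  ultimately have ge: "(1/m) ^ ?N * m ^ card S \<ge> 1" using assms(2)
    by (metis mult_right_mono zero_le_power less_imp_le)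
  have "fterm E S x1 x2 y1 y2 \<le> ((1/m) ^ ?N * m ^ card S) * fterm E S x1 x2 y1 y2"
    using ge fterm_nonneg[OF assms(4-7), of E S] by (simp add: mult_le_cancel_right1)
  then show "fterm E S x1 x2 y1 y2 \<le> fterm E S (m * x1) (m * x2) (y1 / m) (y2 / m)" using eq by simp
qed

lemma bex_le: "x \<in> A \<Longrightarrow> (x::real) \<le> y \<Longrightarrow> \<exists>r\<in>A. r \<le> y"
  by blast

lemma part_c:
  fixes E :: "('v::finite \<times> 'v) set"
  assumes "\<delta> > 0"
  shows "Inf {x1 * y1 + x2 * y2 | x1 x2 y1 y2.
            0 \<le> x1 \<and> 0 \<le> x2 \<and> 0 \<le> y1 \<and> y1 \<le> 1 \<and> 0 \<le> y2 \<and> y2 \<le> 1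
            \<and> fbar E x1 x2 y1 y2 = 1 + \<delta>}
     = Inf {x1 * y1 + x2 * y2 | x1 x2 y1 y2.
            0 \<le> x1 \<and> 0 \<le> x2 \<and> 0 \<le> y1 \<and> y1 \<le> 1 \<and> 0 \<le> y2 \<and> y2 \<le> 1
            \<and> max y1 y2 = 1 \<and> fbar E x1 x2 y1 y2 = 1 + \<delta>}"
    (is "Inf ?L = Inf ?R")
proof -
  have memL: "\<exists>x1 x2 y1 y2. l = x1 * y1 + x2 * y2 \<and> 0 \<le> x1 \<and> 0 \<le> x2 \<and> 0 \<le> y1 \<and> y1 \<le> 1 \<and> 0 \<le> y2 \<and> y2 \<le> 1
            \<and> fbar E x1 x2 y1 y2 = 1 + \<delta>" if "l \<in> ?L" for l
    using that by (simp only: mem_Collect_eq)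
  have intoR: "x1 * y1 + x2 * y2 \<in> ?R" if "0 \<le> x1 \<and> 0 \<le> x2 \<and> 0 \<le> y1 \<and> y1 \<le> 1 \<and> 0 \<le> y2 \<and> y2 \<le> 1
            \<and> max y1 y2 = 1 \<and> fbar E x1 x2 y1 y2 = 1 + \<delta>" for x1 x2 y1 y2
    by (rule CollectI, rule exI[of _ x1], rule exI[of _ x2], rule exI[of _ y1], rule exI[of _ y2]) (use that in blast)
  have nnL: "\<forall>z\<in>?L. 0 \<le> z"
  proof
    fix z assume "z \<in> ?L"
    then obtain x1 x2 y1 y2 where "z = x1 * y1 + x2 * y2" "0 \<le> x1" "0 \<le> x2" "0 \<le> y1" "0 \<le> y2"
      using memL by blast
    then show "0 \<le> z" by simp
  qed
  have RL: "?R \<subseteq> ?L"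
    by (intro Collect_mono impI allI, elim exE conjE) (intro exI conjI, (assumption|rule refl)+)
  have nnR: "\<forall>z\<in>?R. 0 \<le> z" using nnL RL by blast
  have bddL: "bdd_below ?L" using nnL unfolding bdd_below_def by blast
  have bddR: "bdd_below ?R" using nnR unfolding bdd_below_def by blast
  show ?thesis
  proof (cases "?L = {}")
    case True
    then have Re: "?R = {}" using RL by blast
    show ?thesis by (simp only: True Re)
  next
    case Lne: False
    obtain l0 where l0: "l0 \<in> ?L" using Lne by blast
    show ?thesis
    proof (cases "E = {}")
      case True
      have key: "\<exists>r\<in>?R. r \<le> \<epsilon>" if "\<epsilon> > 0" for \<epsilon>
      proof -
        obtain x1 x2 y1 y2 where l: "0 \<le> x1" "0 \<le> x2" "fbar E x1 x2 y1 y2 = 1 + \<delta>"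
          using memL[OF l0] by blast
        have e: "\<epsilon> * (x1 * x2 / \<epsilon>) = x1 * x2" using that by simp
        have "fbar E \<epsilon> (x1 * x2 / \<epsilon>) 1 0 = fbar E x1 x2 y1 y2"
          unfolding fbar_empty[OF True] e ..
        then have "\<epsilon> * 1 + (x1 * x2 / \<epsilon>) * 0 \<in> ?R" using l that
          by (intro intoR) (simp only: max_def, simp)
        then show ?thesis by (rule bex_le) simp
      qed
      obtain r where r: "r \<in> ?R" using key[of "1::real", OF zero_less_one] by (elim bexE)
      then have Rne: "?R \<noteq> {}" by (metis empty_iff)
      have "Inf ?R \<le> 0"
      proof (rule field_le_epsilon)
        fix e :: real assume "0 < e"
        obtain r where r: "r \<in> ?R" "r \<le> e" using key[OF \<open>0 < e\<close>] by (elim bexE)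
        have "Inf ?R \<le> r" by (rule cInf_lower[OF r(1) bddR])
        then have "Inf ?R \<le> e" using r(2) by (rule order_trans)
        then show "Inf ?R \<le> 0 + e" by (simp only: add_0_left)
      qed
      moreover have "0 \<le> Inf ?L" by (rule cInf_greatest[OF Lne], rule bspec[OF nnL])
      ultimately have a1: "Inf ?R \<le> Inf ?L" by (rule order_trans)
      have a2: "Inf ?L \<le> Inf ?R" using cInf_superset_mono[OF Rne bddL RL] .
      show ?thesis using a1 a2 by (rule antisym[rotated])
    next
      case Ene: False
      have D: "maxdeg E > 0" using maxdeg_pos[OF Ene] .
      have key: "\<exists>r\<in>?R. r \<le> l" if lL: "l \<in> ?L" for l
      proof -
        obtain x1 x2 y1 y2 where l: "l = x1 * y1 + x2 * y2" "0 \<le> x1" "0 \<le> x2" "0 \<le> y1" "y1 \<le> 1"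
            "0 \<le> y2" "y2 \<le> 1" "fbar E x1 x2 y1 y2 = 1 + \<delta>"
          using memL[OF lL] by blast
        define m where "m = max y1 y2"
        consider "m = 0" | "m = 1" | "0 < m \<and> m < 1" using l unfolding m_def by linarith
        then show ?thesis
        proof cases
          case 1
          then have "y1 = 0" "y2 = 0" using l unfolding m_def by linarith+
          then have "fbar E x1 x2 y1 y2 = 1" using fbar_y0[OF D] by simp
          then have False using l(8) assms by simp
          then show ?thesis ..
        next
          case 2
          then have "l \<in> ?R" unfolding l(1) using l unfolding m_def by (intro intoR) simp
          then show ?thesis by (rule bex_le) simp
        next
          case 3
          define g where "g t = fbar E (t * (m * x1)) (t * (m * x2)) (y1 / m) (y2 / m)" for t
          have g0: "g 0 \<le> 1 + \<delta>" unfolding g_def using fbar_x0[of E] assms by simp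
          have g1: "1 + \<delta> \<le> g 1" unfolding g_def
            using fbar_scale_ge[OF D _ _ l(2,3,4,6), of m] 3 l(8) by simp
          have "\<forall>t. 0 \<le> t \<and> t \<le> 1 \<longrightarrow> isCont g t" unfolding g_def using isCont_fbar_x by blast
          then obtain t where t: "0 \<le> t" "t \<le> 1" "g t = 1 + \<delta>"
            using IVT[of g 0 "1 + \<delta>" 1] g0 g1 by auto
          have mx: "max (y1 / m) (y2 / m) = 1"
          proof (cases "y1 \<le> y2")
            case True
            then have "m = y2" unfolding m_def by simp
            moreover have "y1 / m \<le> y2 / m" using True 3 by (simp add: divide_right_mono)
            ultimately show ?thesis using 3 by (simp add: max_def)
          next
            case False
            then have "m = y1" unfolding m_def by simp
            moreover have "y2 / m \<le> y1 / m" using False 3 by (simp add: divide_right_mono)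
            ultimately show ?thesis using 3 by (simp add: max_def)
          qed
          have le1: "y1 / m \<le> 1" "y2 / m \<le> 1" using 3 l unfolding m_def by (auto simp: divide_le_eq)
          have r: "(t * (m * x1)) * (y1 / m) + (t * (m * x2)) * (y2 / m) \<in> ?R"
            apply (rule intoR)
            using t 3 l le1 mx unfolding g_def by simp
          have "(t * (m * x1)) * (y1 / m) + (t * (m * x2)) * (y2 / m) = t * l"
            using 3 l(1) by (simp add: field_simps)
          also have "\<dots> \<le> l" using t l by (simp add: mult_left_le_one_le)
          finally show ?thesis by (rule bex_le[OF r])
        qed
      qed
      obtain r where r: "r \<in> ?R" using key[OF l0] by (elim bexE)
      then have Rne: "?R \<noteq> {}" by (metis empty_iff)
      have a1: "Inf ?R \<le> Inf ?L" by (rule cInf_mono[OF Lne bddR key])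
      have a2: "Inf ?L \<le> Inf ?R" using cInf_superset_mono[OF Rne bddL RL] .
      show ?thesis using a1 a2 by (rule antisym[rotated])
    qed
  qed
qed


lemma sum_indicator_nat:
  fixes n :: nat
  assumes "B \<subseteq> {..<n}"
  shows "(\<Sum>j<n. if j \<in> B then (L::real) else 0) = L * card B"
proof -
  have "(\<Sum>j<n. if j \<in> B then L else 0) = sum (\<lambda>_. L) {j\<in>{..<n}. j \<in> B}"
    by (rule sum.inter_filter[symmetric]) simp
  also have "{j\<in>{..<n}. j \<in> B} = B" using assms by blast
  finally show ?thesis by simp
qed

lemma block_sum:
  fixes n :: nat
  assumes "A \<subseteq> {..<n}" "B \<subseteq> {..<n}"
  shows "(\<Sum>i<n. \<Sum>j<n. if i \<in> A \<and> j \<in> B then (L::real) else 0) = L * card A * card B"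
proof -
  have "(\<Sum>i<n. \<Sum>j<n. if i \<in> A \<and> j \<in> B then L else 0) = (\<Sum>i<n. if i \<in> A then L * card B else 0)"
  proof (rule sum.cong[OF refl])
    fix i
    show "(\<Sum>j<n. if i \<in> A \<and> j \<in> B then L else 0) = (if i \<in> A then L * card B else 0)"
      using sum_indicator_nat[OF assms(2), of L] by auto
  qed
  also have "\<dots> = L * card B * card A" by (rule sum_indicator_nat[OF assms(1)])
  finally show ?thesis by simp
qed

lemma ev_p:
  fixes p :: "nat \<Rightarrow> real"
  assumes "\<forall>\<^sub>F n in sequentially. 0 < p n" "p \<longlonglongrightarrow> 0"
  shows "\<forall>\<^sub>F n in sequentially. 0 < p n \<and> p n < 1 \<and> 0 < n"
proof -
  have "\<forall>\<^sub>F n in sequentially. p n < 1" using order_tendstoD(2)[OF assms(2), of 1] by simp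
  then show ?thesis using assms(1) eventually_gt_at_top[of "0::nat"] by eventually_elim simp
qed


lemma clique_density:
  fixes E :: "('v::finite \<times> 'v) set"
  assumes dg: "digraph E" and "0 \<le> p" "s \<le> n"
    and Qd: "Q = (\<lambda>i j. if i \<noteq> j \<and> i < s \<and> j < s then 1 else if i = j then 0 else p)"
  shows "(real (s - card (UNIV::'v set)) ^ card (UNIV::'v set)
           + p ^ card E * real (n - s - card (UNIV::'v set)) ^ card (UNIV::'v set))
         / real n ^ card (UNIV::'v set) \<le> hom_density E n Q"
proof -
  let ?k = "card (UNIV::'v set)"
  define M where "M b = (if b then {\<phi> \<in> PiE (UNIV::'v set) (\<lambda>_. {..<s}). inj_on \<phi> UNIV}
                     else {\<phi> \<in> PiE (UNIV::'v set) (\<lambda>_. {s..<n}). inj_on \<phi> UNIV})" for b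
  define w where "w b = (if b then 1 else p ^ card E)" for b
  have noloop: "\<And>u v. (u, v) \<in> E \<Longrightarrow> u \<noteq> v" using dg unfolding digraph_def by blast
  have disj: "\<forall>i\<in>UNIV. \<forall>j\<in>UNIV. i \<noteq> j \<longrightarrow> M i \<inter> M j = {}"
  proof (intro ballI impI)
    fix i j :: bool assume "i \<noteq> j"
    show "M i \<inter> M j = {}"
    proof (rule ccontr)
      assume "M i \<inter> M j \<noteq> {}"
      then obtain \<phi> where "\<phi> \<in> M True" "\<phi> \<in> M False" using \<open>i \<noteq> j\<close> by (cases i; cases j) auto
      then have "\<phi> undefined < s" "\<phi> undefined \<ge> s" unfolding M_def by (auto simp: PiE_def Pi_def)
      then show False by simp
    qed
  qed
  have sub: "\<forall>i\<in>UNIV. M i \<subseteq> PiE UNIV (\<lambda>_. {..<n})"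
    using assms(3) unfolding M_def by (auto simp: PiE_def Pi_def dest: less_le_trans)
  have wt: "\<forall>i\<in>UNIV. \<forall>\<phi>\<in>M i. w i \<le> (\<Prod>e\<in>E. Q (\<phi> (fst e)) (\<phi> (snd e)))"
  proof (intro ballI)
    fix i \<phi> assume "\<phi> \<in> M i"
    show "w i \<le> (\<Prod>e\<in>E. Q (\<phi> (fst e)) (\<phi> (snd e)))"
    proof (cases i)
      case True
      then have \<phi>: "\<forall>v. \<phi> v < s" "inj \<phi>" using \<open>\<phi> \<in> M i\<close> unfolding M_def by (auto simp: PiE_def Pi_def)
      have "\<forall>e\<in>E. Q (\<phi> (fst e)) (\<phi> (snd e)) = 1"
      proof
        fix e assume e: "e \<in> E"
        then have "fst e \<noteq> snd e" using noloop[of "fst e" "snd e"] by simp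
        then have "\<phi> (fst e) \<noteq> \<phi> (snd e)" using \<phi>(2) by (auto simp: inj_def)
        then show "Q (\<phi> (fst e)) (\<phi> (snd e)) = 1" using \<phi>(1) Qd by simp
      qed
      then show ?thesis using True w_def by simp
    next
      case False
      then have \<phi>: "\<forall>v. s \<le> \<phi> v" "inj \<phi>" using \<open>\<phi> \<in> M i\<close> unfolding M_def by (auto simp: PiE_def Pi_def)
      have "\<forall>e\<in>E. Q (\<phi> (fst e)) (\<phi> (snd e)) = p"
      proof
        fix e assume e: "e \<in> E"
        then have "fst e \<noteq> snd e" using noloop[of "fst e" "snd e"] by simp
        then have "\<phi> (fst e) \<noteq> \<phi> (snd e)" using \<phi>(2) by (auto simp: inj_def)
        then show "Q (\<phi> (fst e)) (\<phi> (snd e)) = p" using \<phi>(1)[rule_format, of "fst e"] Qd by auto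
      qed
      then show ?thesis using False w_def by simp
    qed
  qed
  have Qnn: "\<forall>i<n. \<forall>j<n. 0 \<le> Q i j" using assms(2) Qd by simp
  have main: "(\<Sum>i\<in>UNIV. real (card (M i)) * w i) / real n ^ ?k \<le> hom_density E n Q"
    by (rule hom_lower[OF _ disj sub wt Qnn]) simp
  have c1: "(s - ?k) ^ ?k \<le> card (M True)"
    using inj_count[of "UNIV::'v set" "\<lambda>_. {..<s}"] unfolding M_def by simp
  have c0: "(n - s - ?k) ^ ?k \<le> card (M False)"
    using inj_count[of "UNIV::'v set" "\<lambda>_. {s..<n}"] unfolding M_def by simp
  have "real (s - ?k) ^ ?k + p ^ card E * real (n - s - ?k) ^ ?k
      \<le> real (card (M True)) * w True + real (card (M False)) * w False"
  proof -
    have A1: "real (s - ?k) ^ ?k \<le> real (card (M True))" using c1 by (metis of_nat_le_iff of_nat_power)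
    have "real (n - s - ?k) ^ ?k \<le> real (card (M False))" using c0 by (metis of_nat_le_iff of_nat_power)
    then have A2: "real (n - s - ?k) ^ ?k * p ^ card E \<le> real (card (M False)) * p ^ card E"
      using assms(2) by (intro mult_right_mono) simp_all
    have "w True = 1" "w False = p ^ card E" unfolding w_def by simp_all
    have A3: "p ^ card E * real (n - s - ?k) ^ ?k \<le> real (card (M False)) * p ^ card E"
      using A2 by (simp only: mult.commute)
    show ?thesis unfolding \<open>w True = 1\<close> \<open>w False = p ^ card E\<close> mult_1_right
      by (rule add_mono[OF A1 A3])
  qed
  also have "\<dots> = (\<Sum>i\<in>UNIV. real (card (M i)) * w i)" by (simp add: UNIV_bool)
  finally have "real (s - ?k) ^ ?k + p ^ card E * real (n - s - ?k) ^ ?k \<le> (\<Sum>i\<in>UNIV. real (card (M i)) * w i)" .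
  then have "(real (s - ?k) ^ ?k + p ^ card E * real (n - s - ?k) ^ ?k) / real n ^ ?k
      \<le> (\<Sum>i\<in>UNIV. real (card (M i)) * w i) / real n ^ ?k" by (simp add: divide_right_mono)
  then show ?thesis using main by linarith
qed

lemma clique_cost:
  assumes "0 < p" "p < 1" "s \<le> n"
    and Qd: "Q = (\<lambda>i j. if i \<noteq> j \<and> i < s \<and> j < s then 1 else if i = j then 0 else p)"
  shows "Ient_mat p n Q \<le> real s ^ 2 * ln (1 / p)" "Q \<in> Qset n"
proof -
  have L: "ln (1 / p) \<ge> 0" using assms by simp
  have "Ient_mat p n Q \<le> (\<Sum>i<n. \<Sum>j<n. if i \<in> {..<s} \<and> j \<in> {..<s} then ln (1 / p) else 0)"
    unfolding Ient_mat_def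
  proof (intro sum_mono)
    fix i j
    show "(if i \<noteq> j then Ient p (Q i j) else 0) \<le> (if i \<in> {..<s} \<and> j \<in> {..<s} then ln (1 / p) else 0)"
      using assms L Ient_p[of p] Ient_1[of p] by auto
  qed
  also have "\<dots> = ln (1 / p) * real s * real s" using block_sum[of "{..<s}" n "{..<s}"] assms(3) by auto
  finally show "Ient_mat p n Q \<le> real s ^ 2 * ln (1 / p)" by (simp add: power2_eq_square mult_ac)
  show "Q \<in> Qset n" unfolding Qset_def Qd using assms by auto
qed


definition Tset :: "('v \<times> 'v) set \<Rightarrow> 'v set \<Rightarrow> nat \<Rightarrow> nat \<Rightarrow> nat \<Rightarrow> nat \<Rightarrow> nat \<Rightarrow> 'v \<Rightarrow> nat set" where
  "Tset E S n a1 a2 b1 b2 v =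
    (if v \<in> S then
       (if \<not> (\<exists>u. (u, v) \<in> E) then {..<a1}
        else if \<not> (\<exists>u. (v, u) \<in> E) then {..<a2} else {..<min a1 a2})
     else if v \<in> Nplus E S \<inter> Nminus E S then {max a1 a2..<max a1 a2 + min b1 b2}
     else if v \<in> Nplus E S then {max a1 a2..<max a1 a2 + b1}
     else if v \<in> Nminus E S then {max a1 a2..<max a1 a2 + b2}
     else {max a1 a2..<n})"

definition hubQ :: "nat \<Rightarrow> nat \<Rightarrow> nat \<Rightarrow> nat \<Rightarrow> real \<Rightarrow> nat \<Rightarrow> nat \<Rightarrow> real" where
  "hubQ a1 a2 b1 b2 p i j =
    (if (i < a1 \<and> max a1 a2 \<le> j \<and> j < max a1 a2 + b1) \<or> (max a1 a2 \<le> i \<and> i < max a1 a2 + b2 \<and> j < a2)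
     then 1 else if i = j then 0 else p)"

lemma Tset_finite: "finite (Tset E S n a1 a2 b1 b2 v)"
  unfolding Tset_def by auto

lemma Tset_S: "v \<in> S \<Longrightarrow> Tset E S n a1 a2 b1 b2 v \<subseteq> {..<max a1 a2}"
  unfolding Tset_def by auto

lemma Tset_notS: "v \<notin> S \<Longrightarrow> Tset E S n a1 a2 b1 b2 v \<subseteq> {max a1 a2..}"
  unfolding Tset_def by auto

lemma Tset_bound: "max a1 a2 + max b1 b2 \<le> n \<Longrightarrow> Tset E S n a1 a2 b1 b2 v \<subseteq> {..<n}"
  unfolding Tset_def by auto

lemma hub_weight:
  fixes E :: "('v::finite \<times> 'v) set"
  assumes dg: "digraph E" and p: "0 \<le> p" "p \<le> 1" and S: "S \<in> indep_sets E"
    and \<phi>: "\<phi> \<in> PiE UNIV (Tset E S n a1 a2 b1 b2)" "inj \<phi>"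
  shows "p ^ (card E - maxdeg E * card S) \<le> (\<Prod>e\<in>E. hubQ a1 a2 b1 b2 p (\<phi> (fst e)) (\<phi> (snd e)))"
proof -
  let ?Q = "hubQ a1 a2 b1 b2 p"
  let ?ES = "{e\<in>E. fst e \<in> S \<or> snd e \<in> S}"
  let ?a = "max a1 a2"
  have T: "\<phi> v \<in> Tset E S n a1 a2 b1 b2 v" for v using \<phi>(1) by (auto simp: PiE_def Pi_def)
  have noloop: "\<And>u v. (u, v) \<in> E \<Longrightarrow> u \<noteq> v" using dg unfolding digraph_def by blast
  have one: "?Q (\<phi> (fst e)) (\<phi> (snd e)) = 1" if e: "e \<in> ?ES" for e
  proof -
    obtain u w where uw: "e = (u, w)" by fastforce
    have E: "(u, w) \<in> E" using e uw by simp
    show ?thesis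
    proof (cases "u \<in> S")
      case True
      then have wS: "w \<notin> S" using indep_noedge[OF S] E by blast
      then have wN: "w \<in> Nplus E S" using True E unfolding Nplus_def by blast
      have "\<phi> u < a1"
      proof -
        have "\<exists>x. (u, x) \<in> E" using E by blast
        then show ?thesis using T[of u] True unfolding Tset_def by (auto split: if_splits)
      qed
      moreover have "?a \<le> \<phi> w \<and> \<phi> w < ?a + b1"
        using T[of w] wS wN unfolding Tset_def by (auto split: if_splits)
      ultimately show ?thesis using uw unfolding hubQ_def by simp
    next
      case False
      then have wS: "w \<in> S" using e uw by simp
      then have uN: "u \<in> Nminus E S" using False E unfolding Nminus_def by blast
      have "\<phi> w < a2"
      proof -
        have "\<exists>x. (x, w) \<in> E" using E by blast
        then show ?thesis using T[of w] wS unfolding Tset_def by (auto split: if_splits)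
      qed
      moreover have "?a \<le> \<phi> u \<and> \<phi> u < ?a + b2"
        using T[of u] False uN unfolding Tset_def by (auto split: if_splits)
      ultimately show ?thesis using uw unfolding hubQ_def by simp
    qed
  qed
  have gep: "p \<le> ?Q (\<phi> (fst e)) (\<phi> (snd e))" if e: "e \<in> E" for e
  proof -
    have "fst e \<noteq> snd e" using noloop[of "fst e" "snd e"] e by simp
    then have "\<phi> (fst e) \<noteq> \<phi> (snd e)" using \<phi>(2) by (auto simp: inj_def)
    then show ?thesis using p unfolding hubQ_def by auto
  qed
  have fin: "finite E" by simp
  have sub: "?ES \<subseteq> E" by blast
  have "(\<Prod>e\<in>E. ?Q (\<phi> (fst e)) (\<phi> (snd e))) = (\<Prod>e\<in>E - ?ES. ?Q (\<phi> (fst e)) (\<phi> (snd e))) * (\<Prod>e\<in>?ES. ?Q (\<phi> (fst e)) (\<phi> (snd e)))"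
    by (rule prod.subset_diff[OF sub fin])
  also have "(\<Prod>e\<in>?ES. ?Q (\<phi> (fst e)) (\<phi> (snd e))) = 1" using one by (intro prod.neutral) blast
  finally have eq: "(\<Prod>e\<in>E. ?Q (\<phi> (fst e)) (\<phi> (snd e))) = (\<Prod>e\<in>E - ?ES. ?Q (\<phi> (fst e)) (\<phi> (snd e)))" by simp
  have "p ^ card (E - ?ES) = (\<Prod>e\<in>E - ?ES. p)" by simp
  also have "\<dots> \<le> (\<Prod>e\<in>E - ?ES. ?Q (\<phi> (fst e)) (\<phi> (snd e)))"
    using gep p by (intro prod_mono) auto
  finally have "p ^ card (E - ?ES) \<le> (\<Prod>e\<in>E. ?Q (\<phi> (fst e)) (\<phi> (snd e)))" using eq by simp
  moreover have "card (E - ?ES) = card E - maxdeg E * card S"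
    using card_Diff_subset[OF _ sub] card_incident_S[OF S] by simp
  ultimately show ?thesis by simp
qed

lemma hub_density:
  fixes E :: "('v::finite \<times> 'v) set"
  assumes dg: "digraph E" and p: "0 \<le> p" "p \<le> 1" and nb: "max a1 a2 + max b1 b2 \<le> n"
  shows "(\<Sum>S\<in>indep_sets E. real (\<Prod>v\<in>UNIV. card (Tset E S n a1 a2 b1 b2 v) - card (UNIV::'v set))
            * p ^ (card E - maxdeg E * card S)) / real n ^ card (UNIV::'v set)
         \<le> hom_density E n (hubQ a1 a2 b1 b2 p)"
proof -
  let ?k = "card (UNIV::'v set)"
  define M where "M S = {\<phi> \<in> PiE (UNIV::'v set) (Tset E S n a1 a2 b1 b2). inj_on \<phi> UNIV}" for S
  define w where "w S = p ^ (card E - maxdeg E * card S)" for S :: "'v set"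
  have disj: "\<forall>i\<in>indep_sets E. \<forall>j\<in>indep_sets E. i \<noteq> j \<longrightarrow> M i \<inter> M j = {}"
  proof (intro ballI impI)
    fix S S' :: "'v set" assume "S \<noteq> S'"
    have key: "S = {v. \<phi> v < max a1 a2}" if "\<phi> \<in> M S" for \<phi> :: "'v \<Rightarrow> nat" and S :: "'v set"
    proof -
      have T: "\<phi> v \<in> Tset E S n a1 a2 b1 b2 v" for v using that unfolding M_def by (auto simp: PiE_def Pi_def)
      show ?thesis
      proof (intro set_eqI iffI)
        fix v assume "v \<in> S" then show "v \<in> {v. \<phi> v < max a1 a2}" using subsetD[OF Tset_S[of v S E n a1 a2 b1 b2] T[of v]] by simp
      next
        fix v assume "v \<in> {v. \<phi> v < max a1 a2}"
        then show "v \<in> S" using subsetD[OF Tset_notS[of v S E n a1 a2 b1 b2] T[of v]] by force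
      qed
    qed
    show "M S \<inter> M S' = {}" using key \<open>S \<noteq> S'\<close> by blast
  qed
  have sub: "\<forall>i\<in>indep_sets E. M i \<subseteq> PiE UNIV (\<lambda>_. {..<n})"
  proof (intro ballI subsetI)
    fix S \<phi> assume "\<phi> \<in> M S"
    then have "\<phi> \<in> PiE UNIV (Tset E S n a1 a2 b1 b2)" unfolding M_def by simp
    moreover have "PiE UNIV (Tset E S n a1 a2 b1 b2) \<subseteq> PiE UNIV (\<lambda>_. {..<n})"
      by (intro PiE_mono) (rule Tset_bound[OF nb])
    ultimately show "\<phi> \<in> PiE UNIV (\<lambda>_. {..<n})" by blast
  qed
  have wt: "\<forall>i\<in>indep_sets E. \<forall>\<phi>\<in>M i. w i \<le> (\<Prod>e\<in>E. hubQ a1 a2 b1 b2 p (\<phi> (fst e)) (\<phi> (snd e)))"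
    unfolding M_def w_def using hub_weight[OF dg p] by auto
  have Qnn: "\<forall>i<n. \<forall>j<n. 0 \<le> hubQ a1 a2 b1 b2 p i j" using p unfolding hubQ_def by simp
  have main: "(\<Sum>i\<in>indep_sets E. real (card (M i)) * w i) / real n ^ ?k \<le> hom_density E n (hubQ a1 a2 b1 b2 p)"
    by (rule hom_lower[OF _ disj sub wt Qnn]) simp
  have "(\<Sum>S\<in>indep_sets E. real (\<Prod>v\<in>UNIV. card (Tset E S n a1 a2 b1 b2 v) - ?k) * w S)
      \<le> (\<Sum>i\<in>indep_sets E. real (card (M i)) * w i)"
  proof (rule sum_mono)
    fix S
    have "(\<Prod>v\<in>UNIV. card (Tset E S n a1 a2 b1 b2 v) - ?k) \<le> card (M S)"
      unfolding M_def by (rule inj_count) (simp_all add: Tset_finite)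
    then have "real (\<Prod>v\<in>UNIV. card (Tset E S n a1 a2 b1 b2 v) - ?k) \<le> real (card (M S))" by (simp only: of_nat_le_iff)
    then show "real (\<Prod>v\<in>UNIV. card (Tset E S n a1 a2 b1 b2 v) - ?k) * w S \<le> real (card (M S)) * w S"
      using p unfolding w_def by (intro mult_right_mono) simp_all
  qed
  then have "(\<Sum>S\<in>indep_sets E. real (\<Prod>v\<in>UNIV. card (Tset E S n a1 a2 b1 b2 v) - ?k) * w S) / real n ^ ?k
      \<le> (\<Sum>i\<in>indep_sets E. real (card (M i)) * w i) / real n ^ ?k" by (simp add: divide_right_mono)
  then show ?thesis using main unfolding w_def by linarith
qed

lemma hub_cost:
  assumes "0 < p" "p < 1" "max a1 a2 + max b1 b2 \<le> n"
  shows "Ient_mat p n (hubQ a1 a2 b1 b2 p) \<le> ln (1 / p) * (real a1 * real b1 + real b2 * real a2)"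
    "hubQ a1 a2 b1 b2 p \<in> Qset n"
proof -
  let ?a = "max a1 a2"
  let ?L = "ln (1 / p)"
  have L: "?L \<ge> 0" using assms by simp
  have s1: "{..<a1} \<subseteq> {..<n}" "{?a..<?a + b1} \<subseteq> {..<n}" "{?a..<?a + b2} \<subseteq> {..<n}" "{..<a2} \<subseteq> {..<n}"
    using assms(3) by auto
  have "Ient_mat p n (hubQ a1 a2 b1 b2 p) \<le> (\<Sum>i<n. \<Sum>j<n. (if i \<in> {..<a1} \<and> j \<in> {?a..<?a + b1} then ?L else 0)
        + (if i \<in> {?a..<?a + b2} \<and> j \<in> {..<a2} then ?L else 0))"
    unfolding Ient_mat_def
  proof (intro sum_mono)
    fix i j
    show "(if i \<noteq> j then Ient p (hubQ a1 a2 b1 b2 p i j) else 0) \<le> (if i \<in> {..<a1} \<and> j \<in> {?a..<?a + b1} then ?L else 0)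
        + (if i \<in> {?a..<?a + b2} \<and> j \<in> {..<a2} then ?L else 0)"
      using assms L Ient_p[of p] Ient_1[of p] unfolding hubQ_def by auto
  qed
  also have "\<dots> = ?L * real a1 * real b1 + ?L * real b2 * real a2"
    using block_sum[OF s1(1,2), of ?L] block_sum[OF s1(3,4), of ?L] by (simp add: sum.distrib)
  finally show "Ient_mat p n (hubQ a1 a2 b1 b2 p) \<le> ?L * (real a1 * real b1 + real b2 * real a2)"
    by (simp add: algebra_simps)
  show "hubQ a1 a2 b1 b2 p \<in> Qset n" unfolding Qset_def hubQ_def using assms by auto
qed


definition ind :: "bool \<Rightarrow> nat" where "ind P = (if P then 1 else 0)"

definition gfun :: "('v \<times> 'v) set \<Rightarrow> 'v set \<Rightarrow> real \<Rightarrow> real \<Rightarrow> real \<Rightarrow> real \<Rightarrow> 'v \<Rightarrow> real" where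
  "gfun E S X1 X2 y1 y2 v =
     X1 ^ ind (v \<in> S \<and> \<not> (\<exists>u. (u, v) \<in> E)) * X2 ^ ind (v \<in> S \<and> \<not> (\<exists>u. (v, u) \<in> E))
     * (min X1 X2) ^ ind (v \<in> S \<and> (\<exists>u. (u, v) \<in> E) \<and> (\<exists>u. (v, u) \<in> E))
     * y1 ^ ind (v \<in> Nplus E S - Nminus E S) * y2 ^ ind (v \<in> Nminus E S - Nplus E S)
     * (min y1 y2) ^ ind (v \<in> Nplus E S \<inter> Nminus E S)"

lemma prod_ind:
  fixes P :: "'v::finite \<Rightarrow> bool"
  shows "(\<Prod>v\<in>UNIV. (c::real) ^ ind (P v)) = c ^ card {v. P v}"
proof -
  have "(\<Prod>v\<in>UNIV. c ^ ind (P v)) = c ^ (\<Sum>v\<in>UNIV. ind (P v))" by (simp add: power_sum)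
  also have "(\<Sum>v\<in>UNIV. ind (P v)) = card {v. P v}"
    unfolding ind_def by (simp add: sum.If_cases)
  finally show ?thesis .
qed

lemma prod_gfun:
  fixes E :: "('v::finite \<times> 'v) set"
  shows "(\<Prod>v\<in>UNIV. gfun E S X1 X2 y1 y2 v) = fterm E S X1 X2 y1 y2"
proof -
  have "(\<Prod>v\<in>UNIV. gfun E S X1 X2 y1 y2 v) =
     (\<Prod>v\<in>UNIV. X1 ^ ind (v \<in> S \<and> \<not> (\<exists>u. (u, v) \<in> E))) * (\<Prod>v\<in>UNIV. X2 ^ ind (v \<in> S \<and> \<not> (\<exists>u. (v, u) \<in> E)))
     * (\<Prod>v\<in>UNIV. (min X1 X2) ^ ind (v \<in> S \<and> (\<exists>u. (u, v) \<in> E) \<and> (\<exists>u. (v, u) \<in> E)))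
     * (\<Prod>v\<in>UNIV. y1 ^ ind (v \<in> Nplus E S - Nminus E S)) * (\<Prod>v\<in>UNIV. y2 ^ ind (v \<in> Nminus E S - Nplus E S))
     * (\<Prod>v\<in>UNIV. (min y1 y2) ^ ind (v \<in> Nplus E S \<inter> Nminus E S))"
    unfolding gfun_def by (simp only: prod.distrib)
  also have "\<dots> = fterm E S X1 X2 y1 y2"
    by (simp only: prod_ind Collect_mem_eq fterm_def vplus_def vminus_def vpm_def)
  finally show ?thesis .
qed

lemma min_nat_ceil: "0 \<le> r \<Longrightarrow> min (nat \<lceil>x * r\<rceil>) (nat \<lceil>y * r\<rceil>) = nat \<lceil>min x y * (r::real)\<rceil>"
proof (cases "x \<le> y")
  case True
  assume r: "0 \<le> r"
  then have "x * r \<le> y * r" using True by (simp add: mult_right_mono)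
  then have "nat \<lceil>x * r\<rceil> \<le> nat \<lceil>y * r\<rceil>" by (intro nat_mono ceiling_mono)
  then show ?thesis using True by (simp add: min_def)
next
  case False
  assume r: "0 \<le> r"
  then have "y * r \<le> x * r" using False by (simp add: mult_right_mono)
  then have a: "nat \<lceil>y * r\<rceil> \<le> nat \<lceil>x * r\<rceil>" by (intro nat_mono ceiling_mono)
  have "min x y = y" using False by simp
  then show ?thesis using min_absorb2[OF a] by simp
qed

lemma max_nat_ceil: "0 \<le> r \<Longrightarrow> max (nat \<lceil>x * r\<rceil>) (nat \<lceil>y * r\<rceil>) = nat \<lceil>max x y * (r::real)\<rceil>"
proof (cases "x \<le> y")
  case True
  assume r: "0 \<le> r"
  then have "x * r \<le> y * r" using True by (simp add: mult_right_mono)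
  then have "nat \<lceil>x * r\<rceil> \<le> nat \<lceil>y * r\<rceil>" by (intro nat_mono ceiling_mono)
  then show ?thesis using True by (simp add: max_def)
next
  case False
  assume r: "0 \<le> r"
  then have "y * r \<le> x * r" using False by (simp add: mult_right_mono)
  then have a: "nat \<lceil>y * r\<rceil> \<le> nat \<lceil>x * r\<rceil>" by (intro nat_mono ceiling_mono)
  have "max x y = x" using False by simp
  then show ?thesis using max_absorb1[OF a] by simp
qed

lemma min_nat_floor: "0 \<le> r \<Longrightarrow> min (nat \<lfloor>x * r\<rfloor>) (nat \<lfloor>y * r\<rfloor>) = nat \<lfloor>min x y * (r::real)\<rfloor>"
proof (cases "x \<le> y")
  case True
  assume r: "0 \<le> r"
  then have "x * r \<le> y * r" using True by (simp add: mult_right_mono)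
  then have "nat \<lfloor>x * r\<rfloor> \<le> nat \<lfloor>y * r\<rfloor>" by (intro nat_mono floor_mono)
  then show ?thesis using True by (simp add: min_def)
next
  case False
  assume r: "0 \<le> r"
  then have "y * r \<le> x * r" using False by (simp add: mult_right_mono)
  then have a: "nat \<lfloor>y * r\<rfloor> \<le> nat \<lfloor>x * r\<rfloor>" by (intro nat_mono floor_mono)
  have "min x y = y" using False by simp
  then show ?thesis using min_absorb2[OF a] by simp
qed

lemma Tset_lim:
  fixes E :: "('v::finite \<times> 'v) set"
  assumes S: "S \<in> indep_sets E" and D: "maxdeg E > 0"
    and h1: "(\<lambda>n. real (a1 n - k) / r n) \<longlonglongrightarrow> X1"
    and h2: "(\<lambda>n. real (a2 n - k) / r n) \<longlonglongrightarrow> X2"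
    and hm: "(\<lambda>n. real (min (a1 n) (a2 n) - k) / r n) \<longlonglongrightarrow> min X1 X2"
    and g1: "(\<lambda>n. real (b1 n - k) / real n) \<longlonglongrightarrow> y1"
    and g2: "(\<lambda>n. real (b2 n - k) / real n) \<longlonglongrightarrow> y2"
    and gm: "(\<lambda>n. real (min (b1 n) (b2 n) - k) / real n) \<longlonglongrightarrow> min y1 y2"
    and g0: "(\<lambda>n. real (n - max (a1 n) (a2 n) - k) / real n) \<longlonglongrightarrow> 1"
  shows "(\<lambda>n. real (card (Tset E S n (a1 n) (a2 n) (b1 n) (b2 n) v) - k) / (if v \<in> S then r n else real n))
           \<longlonglongrightarrow> gfun E S X1 X2 y1 y2 v"
proof (cases "v \<in> S")
  case True
  then have nN: "v \<notin> Nplus E S" "v \<notin> Nminus E S" unfolding Nplus_def Nminus_def by auto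
  have ni: "(\<exists>u. (u, v) \<in> E) \<or> (\<exists>u. (v, u) \<in> E)" by (rule nonisolated[OF S D True])
  consider "\<not> (\<exists>u. (u, v) \<in> E)" | "(\<exists>u. (u, v) \<in> E) \<and> \<not> (\<exists>u. (v, u) \<in> E)"
    | "(\<exists>u. (u, v) \<in> E) \<and> (\<exists>u. (v, u) \<in> E)" by blast
  then show ?thesis
  proof cases
    case 1
    then have "\<exists>u. (v, u) \<in> E" using ni by blast
    then have g: "gfun E S X1 X2 y1 y2 v = X1" unfolding gfun_def ind_def using True nN 1 by simp
    have "card (Tset E S n (a1 n) (a2 n) (b1 n) (b2 n) v) = a1 n" for n
      unfolding Tset_def using True 1 by simp
    then show ?thesis using h1 True g by simp
  next
    case 2
    then have g: "gfun E S X1 X2 y1 y2 v = X2" unfolding gfun_def ind_def using True nN by simp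
    have "card (Tset E S n (a1 n) (a2 n) (b1 n) (b2 n) v) = a2 n" for n
      unfolding Tset_def using True 2 by simp
    then show ?thesis using h2 True g by simp
  next
    case 3
    then have g: "gfun E S X1 X2 y1 y2 v = min X1 X2" unfolding gfun_def ind_def using True nN by simp
    have "card (Tset E S n (a1 n) (a2 n) (b1 n) (b2 n) v) = min (a1 n) (a2 n)" for n
      unfolding Tset_def using True 3 by simp
    then show ?thesis using hm True g by simp
  qed
next
  case False
  consider "v \<in> Nplus E S \<inter> Nminus E S" | "v \<in> Nplus E S - Nminus E S" | "v \<in> Nminus E S - Nplus E S"
    | "v \<notin> Nplus E S \<and> v \<notin> Nminus E S" by blast
  then show ?thesis
  proof cases
    case 1
    then have g: "gfun E S X1 X2 y1 y2 v = min y1 y2" unfolding gfun_def ind_def using False by simp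
    have "card (Tset E S n (a1 n) (a2 n) (b1 n) (b2 n) v) = min (b1 n) (b2 n)" for n
      unfolding Tset_def using False 1 by simp
    then show ?thesis using gm False g by simp
  next
    case 2
    then have g: "gfun E S X1 X2 y1 y2 v = y1" unfolding gfun_def ind_def using False by simp
    have "card (Tset E S n (a1 n) (a2 n) (b1 n) (b2 n) v) = b1 n" for n
      unfolding Tset_def using False 2 by simp
    then show ?thesis using g1 False g by simp
  next
    case 3
    then have g: "gfun E S X1 X2 y1 y2 v = y2" unfolding gfun_def ind_def using False by simp
    have "card (Tset E S n (a1 n) (a2 n) (b1 n) (b2 n) v) = b2 n" for n
      unfolding Tset_def using False 3 by simp
    then show ?thesis using g2 False g by simp
  next
    case 4
    then have g: "gfun E S X1 X2 y1 y2 v = 1" unfolding gfun_def ind_def using False by simp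
    have "card (Tset E S n (a1 n) (a2 n) (b1 n) (b2 n) v) = n - max (a1 n) (a2 n)" for n
      unfolding Tset_def using False 4 by simp
    then show ?thesis using g0 False g by simp
  qed
qed

lemma prod_denom:
  fixes S :: "'v::finite set"
  shows "(\<Prod>v\<in>UNIV. if v \<in> S then r else (m::real)) = r ^ card S * m ^ (card (UNIV::'v set) - card S)"
proof -
  have "(\<Prod>v\<in>UNIV. if v \<in> S then r else m) = (\<Prod>v\<in>UNIV \<inter> {v. v \<in> S}. r) * (\<Prod>v\<in>UNIV \<inter> - {v. v \<in> S}. m)"
    by (rule prod.If_cases) simp
  also have "\<dots> = r ^ card S * m ^ card (- S)" by simp
  also have "card (- S) = card (UNIV::'v set) - card S"
  proof -
    have "card (UNIV::'v set) = card (S \<union> - S)" by simp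
    also have "\<dots> = card S + card (- S)" by (rule card_Un_disjoint) auto
    finally show ?thesis by simp
  qed
  finally show ?thesis .
qed


lemma alg_id:
  fixes p n P :: real
  assumes "0 < p" "0 < n" "c \<le> k" "D * c \<le> e"
  shows "P * p ^ (e - D * c) / n ^ k = p ^ e * (P / ((n * p ^ D) ^ c * n ^ (k - c)))"
proof -
  have e: "p ^ e = p ^ (e - D * c) * (p ^ D) ^ c"
    using assms(4) by (metis le_add_diff_inverse2 power_add power_mult)
  have k: "n ^ k = n ^ c * n ^ (k - c)" using assms(3) by (metis le_add_diff_inverse power_add)
  show ?thesis unfolding e k using assms(1,2) by (simp add: field_simps power_mult_distrib)
qed

lemma L_nonempty:
  fixes E :: "('v::finite \<times> 'v) set"
  assumes dg: "digraph E" and D: "maxdeg E > 0" and dpos: "\<delta> > 0"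
  shows "\<exists>x. 0 \<le> x \<and> fbar E x x 1 1 = 1 + \<delta>"
proof -
  obtain v where v: "deg E v = maxdeg E" using maxdeg_attained by blast
  have vi: "{v} \<in> indep_sets E" using v dg unfolding indep_sets_def digraph_def by auto
  have ft: "fterm E {v} x x 1 1 = x" if "0 \<le> x" for x
  proof -
    have "fterm E {v} (x * 1) (x * 1) 1 1 = x ^ (vplus E {v} + vminus E {v} + vpm E {v}) * fterm E {v} 1 1 1 1"
      by (rule fterm_xscale[OF that])
    moreover have "vplus E {v} + vminus E {v} + vpm E {v} = 1" using xexp_eq[OF vi D] by simp
    moreover have "fterm E {v} 1 1 1 1 = 1" unfolding fterm_def by simp
    ultimately show ?thesis by simp
  qed
  define g where "g t = fbar E (t * 1) (t * 1) 1 1" for t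
  have g0: "g 0 \<le> 1 + \<delta>" unfolding g_def using fbar_x0[of E 1 1] dpos by simp
  have g1: "1 + \<delta> \<le> g (1 + \<delta>)"
  proof -
    have fin: "finite (indep_sets E - {{}})" by simp
    have mem: "{v} \<in> indep_sets E - {{}}" using vi by simp
    have "fterm E {v} (1 + \<delta>) (1 + \<delta>) 1 1 \<le> (\<Sum>S\<in>indep_sets E - {{}}. fterm E S (1 + \<delta>) (1 + \<delta>) 1 1)"
      by (rule member_le_sum[OF mem _ fin]) (use dpos in \<open>simp add: fterm_nonneg\<close>)
    then have "1 + (1 + \<delta>) \<le> fbar E (1 + \<delta>) (1 + \<delta>) 1 1" using fbar_split[of E "1 + \<delta>" "1 + \<delta>" 1 1] ft[of "1 + \<delta>"] dpos by simp
    then show ?thesis unfolding g_def by simp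
  qed
  have "\<forall>t. 0 \<le> t \<and> t \<le> 1 + \<delta> \<longrightarrow> isCont g t" unfolding g_def using isCont_fbar_x by blast
  then obtain t where "0 \<le> t" "t \<le> 1 + \<delta>" "g t = 1 + \<delta>"
    using IVT[of g 0 "1 + \<delta>" "1 + \<delta>"] g0 g1 dpos by auto
  then show ?thesis unfolding g_def by auto
qed

lemma fbar_xscale_ge:
  fixes E :: "('v::finite \<times> 'v) set"
  assumes "1 \<le> l" "0 \<le> x1" "0 \<le> x2" "0 \<le> y1" "0 \<le> y2"
  shows "fbar E (l * x1) (l * x2) y1 y2 \<ge> 1 + l * (fbar E x1 x2 y1 y2 - 1)"
proof -
  have "l * (\<Sum>S\<in>indep_sets E - {{}}. fterm E S x1 x2 y1 y2) = (\<Sum>S\<in>indep_sets E - {{}}. l * fterm E S x1 x2 y1 y2)"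
    by (simp add: sum_distrib_left)
  also have "\<dots> \<le> (\<Sum>S\<in>indep_sets E - {{}}. fterm E S (l * x1) (l * x2) y1 y2)"
  proof (rule sum_mono)
    fix S assume S: "S \<in> indep_sets E - {{}}"
    have m: "vplus E S + vminus E S + vpm E S \<ge> 1" using xexp_pos[of S E] S by simp
    have "l ^ 1 \<le> l ^ (vplus E S + vminus E S + vpm E S)" by (rule power_increasing[OF m assms(1)])
    then have "l * fterm E S x1 x2 y1 y2 \<le> l ^ (vplus E S + vminus E S + vpm E S) * fterm E S x1 x2 y1 y2"
      using fterm_nonneg[OF assms(2-5), of E S] by (intro mult_right_mono) simp_all
    then show "l * fterm E S x1 x2 y1 y2 \<le> fterm E S (l * x1) (l * x2) y1 y2"
      using fterm_xscale[of l E S x1 x2 y1 y2] assms(1) by simp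
  qed
  finally show ?thesis using fbar_split[of E x1 x2 y1 y2] fbar_split[of E "l * x1" "l * x2" y1 y2] by simp
qed


lemma part_b:
  fixes E :: "('v::finite \<times> 'v) set" and p :: "nat \<Rightarrow> real"
  assumes dg: "digraph E" and dpos: "\<delta> > 0" and pp: "\<forall>\<^sub>F n in sequentially. 0 < p n"
    and p0: "p \<longlonglongrightarrow> 0"
    and hyp: "(\<lambda>n. real n powr (- 1 / real (maxdeg E))) \<in> o(p)" and ep: "\<epsilon> > 0"
  shows "\<forall>\<^sub>F n in sequentially. Phi E n (p n) \<delta> / (real n ^ 2 * p n ^ maxdeg E * ln (1 / p n))
              \<le> Inf {x1 * y1 + x2 * y2 | x1 x2 y1 y2.
                       0 \<le> x1 \<and> 0 \<le> x2 \<and> 0 \<le> y1 \<and> y1 \<le> 1 \<and> 0 \<le> y2 \<and> y2 \<le> 1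
                       \<and> fbar E x1 x2 y1 y2 = 1 + \<delta>} + \<epsilon>"
    (is "\<forall>\<^sub>F n in sequentially. ?lhs n \<le> Inf ?L + \<epsilon>")
proof -
  define D where "D = maxdeg E"
  define k where "k = card (UNIV::'v set)"
  have Dpos: "D > 0" using Delta_pos[OF pp p0, of 1 D] hyp D_def by simp
  have D': "maxdeg E > 0" using Dpos D_def by simp
  have memL: "\<exists>x1 x2 y1 y2. l = x1 * y1 + x2 * y2 \<and> 0 \<le> x1 \<and> 0 \<le> x2 \<and> 0 \<le> y1 \<and> y1 \<le> 1 \<and> 0 \<le> y2 \<and> y2 \<le> 1
            \<and> fbar E x1 x2 y1 y2 = 1 + \<delta>" if "l \<in> ?L" for l
    using that by (simp only: mem_Collect_eq)
  have intoL: "x1 * y1 + x2 * y2 \<in> ?L" if "0 \<le> x1 \<and> 0 \<le> x2 \<and> 0 \<le> y1 \<and> y1 \<le> 1 \<and> 0 \<le> y2 \<and> y2 \<le> 1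
            \<and> fbar E x1 x2 y1 y2 = 1 + \<delta>" for x1 x2 y1 y2
    by (rule CollectI, rule exI[of _ x1], rule exI[of _ x2], rule exI[of _ y1], rule exI[of _ y2]) (use that in blast)
  have nnL: "\<forall>z\<in>?L. 0 \<le> z"
  proof
    fix z assume "z \<in> ?L"
    then obtain x1 x2 y1 y2 where "z = x1 * y1 + x2 * y2" "0 \<le> x1" "0 \<le> x2" "0 \<le> y1" "0 \<le> y2"
      using memL by blast
    then show "0 \<le> z" by simp
  qed
  have bddL: "bdd_below ?L" using nnL unfolding bdd_below_def by blast
  obtain x0 where x0: "0 \<le> x0" "fbar E x0 x0 1 1 = 1 + \<delta>" using L_nonempty[OF dg D' dpos] by blast
  have "x0 * 1 + x0 * 1 \<in> ?L" by (rule intoL) (use x0 in simp)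
  then have Lne: "?L \<noteq> {}" by (metis empty_iff)
  define I where "I = Inf ?L"
  have "I < I + \<epsilon> / 4" using ep by simp
  then have "Inf ?L < I + \<epsilon> / 4" unfolding I_def[symmetric] .
  from cInf_lessD[OF Lne this] obtain l where lL: "l \<in> ?L" and lless: "l < I + \<epsilon> / 4" by (elim bexE)
  obtain x1 x2 y1 y2 where l: "l = x1 * y1 + x2 * y2" "0 \<le> x1" "0 \<le> x2" "0 \<le> y1" "y1 \<le> 1"
     "0 \<le> y2" "y2 \<le> 1" "fbar E x1 x2 y1 y2 = 1 + \<delta>" using memL[OF lL] by blast
  have l0: "0 \<le> l" by (rule bspec[OF nnL lL])
  define lam where "lam = 1 + (\<epsilon> / 4) / (l + 1)"
  have lam1: "lam > 1" unfolding lam_def using ep l0 by simp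
  have lamL: "lam * l \<le> l + \<epsilon> / 4"
  proof -
    have "lam * l = l + (\<epsilon> / 4) * (l / (l + 1))" unfolding lam_def using l0 by (simp add: field_simps)
    also have "(\<epsilon> / 4) * (l / (l + 1)) \<le> (\<epsilon> / 4) * 1" using ep l0 by (intro mult_left_mono) simp_all
    finally show ?thesis by simp
  qed
  define X1 where "X1 = lam * x1"
  define X2 where "X2 = lam * x2"
  have X: "0 \<le> X1" "0 \<le> X2" unfolding X1_def X2_def using l lam1 by simp_all
  have fbX: "fbar E X1 X2 y1 y2 > 1 + \<delta>"
  proof -
    have "fbar E X1 X2 y1 y2 \<ge> 1 + lam * (fbar E x1 x2 y1 y2 - 1)"
      unfolding X1_def X2_def by (rule fbar_xscale_ge) (use lam1 l in simp_all)
    moreover have "lam * \<delta> > \<delta>" using lam1 dpos by simp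
    ultimately show ?thesis using l(8) by simp
  qed
  have costX: "X1 * y1 + X2 * y2 < I + \<epsilon> / 2"
  proof -
    have "X1 * y1 + X2 * y2 = lam * l" unfolding X1_def X2_def l(1) by (simp add: algebra_simps)
    then show ?thesis using lamL lless by linarith
  qed
  have evp: "\<forall>\<^sub>F n in sequentially. 0 < p n \<and> p n < 1 \<and> 0 < n" by (rule ev_p[OF pp p0])
  define r where "r n = real n * p n ^ D" for n
  have rpos: "\<forall>\<^sub>F n in sequentially. 0 < r n" using evp by eventually_elim (simp add: r_def)
  have hr: "(\<lambda>n. 1 / r n) \<longlonglongrightarrow> 0"
  proof -
    have "(\<lambda>n. 1 / (real n * p n powr (real D / 1))) \<longlonglongrightarrow> 0"
      using hyp_conv[OF pp _ _ Dpos, of 1] hyp unfolding D_def by simp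
    moreover have "\<forall>\<^sub>F n in sequentially. 1 / (real n * p n powr (real D / 1)) = 1 / r n"
      using evp by eventually_elim (simp add: r_def powr_realpow)
    ultimately show ?thesis using Lim_transform_eventually by fastforce
  qed
  define a1 where "a1 n = nat \<lceil>X1 * r n\<rceil>" for n
  define a2 where "a2 n = nat \<lceil>X2 * r n\<rceil>" for n
  define aa where "aa n = max (a1 n) (a2 n)" for n
  define b1 where "b1 n = nat \<lfloor>y1 * real (n - aa n)\<rfloor>" for n
  define b2 where "b2 n = nat \<lfloor>y2 * real (n - aa n)\<rfloor>" for n
  have h1: "(\<lambda>n. real (a1 n - j) / r n) \<longlonglongrightarrow> X1" for j
    unfolding a1_def by (rule lim_ceil[OF rpos hr X(1)])
  have h2: "(\<lambda>n. real (a2 n - j) / r n) \<longlonglongrightarrow> X2" for j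
    unfolding a2_def by (rule lim_ceil[OF rpos hr X(2)])
  have hm: "(\<lambda>n. real (min (a1 n) (a2 n) - k) / r n) \<longlonglongrightarrow> min X1 X2"
  proof -
    have "(\<lambda>n. real (nat \<lceil>min X1 X2 * r n\<rceil> - k) / r n) \<longlonglongrightarrow> min X1 X2"
      by (rule lim_ceil[OF rpos hr]) (use X in simp)
    moreover have "\<forall>\<^sub>F n in sequentially. real (nat \<lceil>min X1 X2 * r n\<rceil> - k) / r n = real (min (a1 n) (a2 n) - k) / r n"
      using rpos by eventually_elim (simp add: a1_def a2_def min_nat_ceil)
    ultimately show ?thesis using Lim_transform_eventually by fastforce
  qed
  have ha: "(\<lambda>n. real (aa n - 0) / r n) \<longlonglongrightarrow> max X1 X2"
  proof -
    have "(\<lambda>n. real (nat \<lceil>max X1 X2 * r n\<rceil> - 0) / r n) \<longlonglongrightarrow> max X1 X2"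
      by (rule lim_ceil[OF rpos hr]) (use X in simp)
    moreover have "\<forall>\<^sub>F n in sequentially. real (nat \<lceil>max X1 X2 * r n\<rceil> - 0) / r n = real (aa n - 0) / r n"
      using rpos by eventually_elim (simp add: aa_def a1_def a2_def max_nat_ceil)
    ultimately show ?thesis using Lim_transform_eventually by fastforce
  qed
  have z: "(0::real) ^ D = 0" using Dpos by (simp add: power_0_left)
  have pD0: "(\<lambda>n. p n ^ D) \<longlonglongrightarrow> 0" using tendsto_power[OF p0, of D] unfolding z .
  have an: "(\<lambda>n. real (aa n) / real n) \<longlonglongrightarrow> 0"
  proof -
    have "(\<lambda>n. real (aa n - 0) / r n * p n ^ D) \<longlonglongrightarrow> max X1 X2 * 0" by (rule tendsto_mult[OF ha pD0])
    moreover have "\<forall>\<^sub>F n in sequentially. real (aa n - 0) / r n * p n ^ D = real (aa n) / real n"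
      using evp by eventually_elim (simp add: r_def)
    ultimately show ?thesis using Lim_transform_eventually by fastforce
  qed
  have ale: "\<forall>\<^sub>F n in sequentially. aa n \<le> n"
  proof -
    have "\<forall>\<^sub>F n in sequentially. real (aa n) / real n < 1" using order_tendstoD(2)[OF an, of 1] by simp
    then show ?thesis using evp by eventually_elim (simp add: divide_less_eq)
  qed
  have g1: "(\<lambda>n. real (b1 n - j) / real n) \<longlonglongrightarrow> y1" for j
    unfolding b1_def by (rule lim_floor[OF an ale l(4)])
  have g2: "(\<lambda>n. real (b2 n - j) / real n) \<longlonglongrightarrow> y2" for j
    unfolding b2_def by (rule lim_floor[OF an ale l(6)])
  have gm: "(\<lambda>n. real (min (b1 n) (b2 n) - k) / real n) \<longlonglongrightarrow> min y1 y2"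
  proof -
    have "(\<lambda>n. real (nat \<lfloor>min y1 y2 * real (n - aa n)\<rfloor> - k) / real n) \<longlonglongrightarrow> min y1 y2"
      by (rule lim_floor[OF an ale]) (use l in simp)
    moreover have "real (nat \<lfloor>min y1 y2 * real (n - aa n)\<rfloor> - k) / real n = real (min (b1 n) (b2 n) - k) / real n" for n
      by (simp add: b1_def b2_def min_nat_floor)
    ultimately show ?thesis by simp
  qed
  have g0: "(\<lambda>n. real (n - max (a1 n) (a2 n) - k) / real n) \<longlonglongrightarrow> 1"
  proof -
    have "(\<lambda>n. real (nat \<lfloor>1 * real (n - aa n)\<rfloor> - k) / real n) \<longlonglongrightarrow> 1"
      by (rule lim_floor[OF an ale]) simp
    then show ?thesis unfolding aa_def by simp
  qed
  define f where "f n S v = real (card (Tset E S n (a1 n) (a2 n) (b1 n) (b2 n) v) - k) / (if v \<in> S then r n else real n)" for n S v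
  have flim: "(\<lambda>n. f n S v) \<longlonglongrightarrow> gfun E S X1 X2 y1 y2 v" if S: "S \<in> indep_sets E" for S v
    unfolding f_def by (rule Tset_lim[OF S D' h1 h2 hm g1 g2 gm g0])
  have sumlim: "(\<lambda>n. \<Sum>S\<in>indep_sets E. \<Prod>v\<in>UNIV. f n S v) \<longlonglongrightarrow> fbar E X1 X2 y1 y2"
  proof -
    have "(\<lambda>n. \<Sum>S\<in>indep_sets E. \<Prod>v\<in>UNIV. f n S v) \<longlonglongrightarrow> (\<Sum>S\<in>indep_sets E. \<Prod>v\<in>UNIV. gfun E S X1 X2 y1 y2 v)"
      by (intro tendsto_sum tendsto_prod flim)
    then show ?thesis unfolding prod_gfun fbar_fterm .
  qed
  have ev1: "\<forall>\<^sub>F n in sequentially. (\<Sum>S\<in>indep_sets E. \<Prod>v\<in>UNIV. f n S v) > 1 + \<delta>"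
    using order_tendstoD(1)[OF sumlim fbX] .
  have costlim: "(\<lambda>n. real (a1 n - 0) / r n * (real (b1 n - 0) / real n) + real (b2 n - 0) / real n * (real (a2 n - 0) / r n))
      \<longlonglongrightarrow> X1 * y1 + y2 * X2"
    by (intro tendsto_add tendsto_mult h1 h2 g1 g2)
  have ev2: "\<forall>\<^sub>F n in sequentially. real (a1 n - 0) / r n * (real (b1 n - 0) / real n) + real (b2 n - 0) / real n * (real (a2 n - 0) / r n)
      < I + \<epsilon>"
    using order_tendstoD(2)[OF costlim, of "I + \<epsilon>"] costX ep by (simp add: mult.commute)
  show ?thesis unfolding I_def[symmetric] using evp ale ev1 ev2
  proof eventually_elim
    case (elim n)
    have pq: "0 < p n" "p n < 1" "0 < n" using elim by auto
    have rp: "r n > 0" unfolding r_def using pq by simp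
    have b1le: "b1 n \<le> n - aa n"
    proof -
      have "y1 * real (n - aa n) \<le> real (n - aa n)" using l(4,5) by (simp add: mult_left_le_one_le)
      then show ?thesis unfolding b1_def by linarith
    qed
    have b2le: "b2 n \<le> n - aa n"
    proof -
      have "y2 * real (n - aa n) \<le> real (n - aa n)" using l(6,7) by (simp add: mult_left_le_one_le)
      then show ?thesis unfolding b2_def by linarith
    qed
    have mb: "max (b1 n) (b2 n) \<le> n - aa n" using b1le b2le by simp
    have nb: "max (a1 n) (a2 n) + max (b1 n) (b2 n) \<le> n" using mb elim(2) unfolding aa_def by linarith
    let ?Q = "hubQ (a1 n) (a2 n) (b1 n) (b2 n) (p n)"
    have dens: "(\<Sum>S\<in>indep_sets E. real (\<Prod>v\<in>UNIV. card (Tset E S n (a1 n) (a2 n) (b1 n) (b2 n) v) - k)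
            * p n ^ (card E - D * card S)) / real n ^ k \<le> hom_density E n ?Q"
      using hub_density[OF dg _ _ nb, of "p n"] pq unfolding k_def D_def by simp
    have ident: "(\<Sum>S\<in>indep_sets E. real (\<Prod>v\<in>UNIV. card (Tset E S n (a1 n) (a2 n) (b1 n) (b2 n) v) - k)
            * p n ^ (card E - D * card S)) / real n ^ k = p n ^ card E * (\<Sum>S\<in>indep_sets E. \<Prod>v\<in>UNIV. f n S v)"
      unfolding sum_divide_distrib sum_distrib_left
    proof (rule sum.cong[OF refl])
      fix S assume S: "S \<in> indep_sets E"
      have ck: "card S \<le> k" unfolding k_def by (rule card_mono) simp_all
      have De: "D * card S \<le> card E"
        using card_incident_S[OF S] card_mono[of E "{e\<in>E. fst e \<in> S \<or> snd e \<in> S}"] unfolding D_def by simp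
      have "(\<Prod>v\<in>UNIV. f n S v) = (\<Prod>v\<in>UNIV. real (card (Tset E S n (a1 n) (a2 n) (b1 n) (b2 n) v) - k))
           / (\<Prod>v\<in>UNIV. (if v \<in> S then r n else real n))"
        unfolding f_def by (rule prod_dividef)
      also have "(\<Prod>v\<in>UNIV. (if v \<in> S then r n else real n)) = r n ^ card S * real n ^ (k - card S)"
        unfolding k_def by (rule prod_denom)
      finally have pf: "(\<Prod>v\<in>UNIV. f n S v) = (\<Prod>v\<in>UNIV. real (card (Tset E S n (a1 n) (a2 n) (b1 n) (b2 n) v) - k))
           / ((real n * p n ^ D) ^ card S * real n ^ (k - card S))" unfolding r_def .
      show "real (\<Prod>v\<in>UNIV. card (Tset E S n (a1 n) (a2 n) (b1 n) (b2 n) v) - k) * p n ^ (card E - D * card S) / real n ^ k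
          = p n ^ card E * (\<Prod>v\<in>UNIV. f n S v)"
        unfolding pf of_nat_prod by (rule alg_id) (use pq ck De in simp_all)
    qed
    have "(1 + \<delta>) * p n ^ card E \<le> hom_density E n ?Q"
    proof -
      have "(1 + \<delta>) * p n ^ card E \<le> p n ^ card E * (\<Sum>S\<in>indep_sets E. \<Prod>v\<in>UNIV. f n S v)"
        using elim pq by (simp add: mult.commute)
      then show ?thesis using dens ident by linarith
    qed
    then have PhiQ: "Phi E n (p n) \<delta> \<le> Ient_mat (p n) n ?Q"
      by (rule Phi_le[OF pq(1,2) hub_cost(2)[OF pq(1,2) nb]])
    have costQ: "Ient_mat (p n) n ?Q \<le> ln (1 / p n) * (real (a1 n) * real (b1 n) + real (b2 n) * real (a2 n))"
      by (rule hub_cost(1)[OF pq(1,2) nb])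
    have lnpos: "ln (1 / p n) > 0" using pq by simp
    have den: "real n ^ 2 * p n ^ maxdeg E * ln (1 / p n) > 0" using pq lnpos by simp
    have "?lhs n \<le> ln (1 / p n) * (real (a1 n) * real (b1 n) + real (b2 n) * real (a2 n)) / (real n ^ 2 * p n ^ maxdeg E * ln (1 / p n))"
      by (rule divide_right_mono) (use PhiQ costQ den in linarith)+
    also have "\<dots> = real (a1 n - 0) / r n * (real (b1 n - 0) / real n) + real (b2 n - 0) / real n * (real (a2 n - 0) / r n)"
      using pq lnpos unfolding r_def D_def by (simp add: field_simps power2_eq_square)
    also have "\<dots> < I + \<epsilon>" using elim by simp
    finally show ?case by simp
  qed
qed


lemma part_a:
  fixes E :: "('v::finite \<times> 'v) set" and p :: "nat \<Rightarrow> real"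
  assumes dg: "digraph E" and dpos: "\<delta> > 0" and pp: "\<forall>\<^sub>F n in sequentially. 0 < p n"
    and p0: "p \<longlonglongrightarrow> 0" and reg: "regular E (maxdeg E)"
    and hyp: "(\<lambda>n. real n powr (- 2 / real (maxdeg E))) \<in> o(p)" and ep: "\<epsilon> > 0"
  shows "\<forall>\<^sub>F n in sequentially. Phi E n (p n) \<delta> / (real n ^ 2 * p n ^ maxdeg E * ln (1 / p n))
              \<le> \<delta> powr (2 / real (card (UNIV::'v set))) + \<epsilon>"
proof -
  define D where "D = maxdeg E"
  define k where "k = card (UNIV::'v set)"
  have Dpos: "D > 0" using Delta_pos[OF pp p0, of 2 D] hyp D_def by simp
  have kpos: "k > 0" unfolding k_def by (simp add: finite_UNIV_card_ge_0)
  have twoe: "2 * card E = k * D" using two_card_E[OF reg] k_def D_def by simp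
  define q where "q n = p n powr (real D / 2)" for n
  have hq: "(\<lambda>n. 1 / (real n * q n)) \<longlonglongrightarrow> 0"
    using hyp_conv[OF pp _ _ Dpos, of 2] hyp unfolding q_def D_def by simp
  have q0: "q \<longlonglongrightarrow> 0" unfolding q_def
    apply (rule tendsto_zero_powrI[OF p0 tendsto_const])
    using pp apply eventually_elim apply simp
    using Dpos by simp
  have evp: "\<forall>\<^sub>F n in sequentially. 0 < p n \<and> p n < 1 \<and> 0 < n" by (rule ev_p[OF pp p0])
  have qk: "q n ^ k = p n ^ card E" if "0 < p n" for n
  proof -
    have "q n ^ k = p n powr (real k * (real D / 2))" unfolding q_def using that by (simp add: powr_power)
    also have "real k * (real D / 2) = real (card E)" using twoe
      by (metis (mono_tags, lifting) nonzero_mult_div_cancel_left of_nat_mult of_nat_numeral times_divide_eq_right zero_neq_numeral of_nat_eq_iff)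
    finally show ?thesis using that by (simp add: powr_realpow)
  qed
  have q2: "q n ^ 2 = p n ^ D" if "0 < p n" for n
  proof -
    have "q n ^ 2 = p n powr (real 2 * (real D / 2))" unfolding q_def using that by (simp add: powr_power)
    also have "\<dots> = p n powr real D" by simp
    finally show ?thesis using that by (simp add: powr_realpow)
  qed
  define c0 where "c0 = \<delta> powr (1 / real k)"
  have c0pos: "c0 > 0" unfolding c0_def using dpos by simp
  have c0k: "c0 ^ k = \<delta>"
  proof -
    have "c0 ^ k = \<delta> powr (real k * (1 / real k))" unfolding c0_def using dpos by (simp add: powr_power)
    also have "\<dots> = \<delta>" using kpos dpos by simp
    finally show ?thesis .
  qed
  have c02: "c0 ^ 2 = \<delta> powr (2 / real k)"
    unfolding c0_def using dpos by (simp add: powr_power)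
  define \<eta> where "\<eta> = min 1 (\<epsilon> / (2 * (2 * c0 + 1)))"
  have \<eta>pos: "\<eta> > 0" unfolding \<eta>_def using ep c0pos by simp
  have \<eta>1: "\<eta> \<le> 1" unfolding \<eta>_def by simp
  have \<eta>e: "\<eta> * (2 * c0 + 1) \<le> \<epsilon> / 2"
  proof -
    have "\<eta> \<le> \<epsilon> / (2 * (2 * c0 + 1))" unfolding \<eta>_def by simp
    then have "\<eta> * (2 * c0 + 1) \<le> \<epsilon> / (2 * (2 * c0 + 1)) * (2 * c0 + 1)"
      using c0pos by (intro mult_right_mono) simp_all
    also have "\<dots> = \<epsilon> / 2" using c0pos by (simp add: field_simps)
    finally show ?thesis .
  qed
  define c where "c = c0 + \<eta>"
  have cpos: "c > 0" unfolding c_def using c0pos \<eta>pos by simp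
  have ck: "c ^ k > \<delta>"
    using power_strict_mono[of c0 c k] c0pos \<eta>pos kpos c0k unfolding c_def by simp
  have c2: "c ^ 2 < \<delta> powr (2 / real k) + \<epsilon>"
  proof -
    have "c ^ 2 = c0 ^ 2 + \<eta> * (2 * c0 + \<eta>)" unfolding c_def by (simp add: power2_eq_square algebra_simps)
    also have "\<eta> * (2 * c0 + \<eta>) \<le> \<eta> * (2 * c0 + 1)" using \<eta>1 \<eta>pos by (intro mult_left_mono) simp_all
    finally show ?thesis using \<eta>e c02 ep by linarith
  qed
  define s where "s n = nat \<lceil>c * (real n * q n)\<rceil>" for n
  have rpos: "\<forall>\<^sub>F n in sequentially. 0 < real n * q n"
    using evp by eventually_elim (simp add: q_def)
  have sA: "(\<lambda>n. real (s n - k) / (real n * q n)) \<longlonglongrightarrow> c"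
    unfolding s_def by (rule lim_ceil[OF rpos hq]) (use cpos in simp)
  have sA0: "(\<lambda>n. real (s n - 0) / (real n * q n)) \<longlonglongrightarrow> c"
    unfolding s_def by (rule lim_ceil[OF rpos hq]) (use cpos in simp)
  have sn: "(\<lambda>n. real (s n) / real n) \<longlonglongrightarrow> 0"
  proof -
    have "(\<lambda>n. real (s n - 0) / (real n * q n) * q n) \<longlonglongrightarrow> c * 0" by (rule tendsto_mult[OF sA0 q0])
    moreover have "\<forall>\<^sub>F n in sequentially. real (s n - 0) / (real n * q n) * q n = real (s n) / real n"
      using evp by eventually_elim (simp add: q_def)
    ultimately show ?thesis using Lim_transform_eventually by fastforce
  qed
  have sle: "\<forall>\<^sub>F n in sequentially. s n \<le> n"
  proof -
    have "\<forall>\<^sub>F n in sequentially. real (s n) / real n < 1" using order_tendstoD(2)[OF sn, of 1] by simp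
    then show ?thesis using evp by eventually_elim (simp add: divide_less_eq)
  qed
  have B: "(\<lambda>n. real (nat \<lfloor>1 * real (n - s n)\<rfloor> - k) / real n) \<longlonglongrightarrow> 1"
    by (rule lim_floor[OF sn sle]) simp
  have B': "(\<lambda>n. real (n - s n - k) / real n) \<longlonglongrightarrow> 1" using B by simp
  have lim: "(\<lambda>n. (real (s n - k) / (real n * q n)) ^ k + (real (n - s n - k) / real n) ^ k) \<longlonglongrightarrow> c ^ k + 1 ^ k"
    by (intro tendsto_add tendsto_power sA B')
  have ev1: "\<forall>\<^sub>F n in sequentially. (real (s n - k) / (real n * q n)) ^ k + (real (n - s n - k) / real n) ^ k > 1 + \<delta>"
    using order_tendstoD(1)[OF lim, of "1 + \<delta>"] ck by simp
  have limc: "(\<lambda>n. (real (s n - 0) / (real n * q n)) ^ 2) \<longlonglongrightarrow> c ^ 2"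
    by (intro tendsto_power sA0)
  have ev2: "\<forall>\<^sub>F n in sequentially. (real (s n - 0) / (real n * q n)) ^ 2 < \<delta> powr (2 / real k) + \<epsilon>"
    using order_tendstoD(2)[OF limc c2] .
  show ?thesis using evp sle ev1 ev2
  proof eventually_elim
    case (elim n)
    let ?p = "p n" let ?s = "s n" let ?q = "q n"
    define Q where "Q = (\<lambda>i j. if i \<noteq> j \<and> i < ?s \<and> j < ?s then 1 else if i = j then 0 else ?p)"
    have pq: "0 < ?p" "?p < 1" "0 < n" using elim by auto
    have qpos: "?q > 0" unfolding q_def using pq by simp
    have dens: "(real (?s - k) ^ k + ?p ^ card E * real (n - ?s - k) ^ k) / real n ^ k \<le> hom_density E n Q"
      using clique_density[OF dg _ _ Q_def, of n] pq elim unfolding k_def by simp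
    have "(real (?s - k) ^ k + ?p ^ card E * real (n - ?s - k) ^ k) / real n ^ k
        = ?p ^ card E * ((real (?s - k) / (real n * ?q)) ^ k + (real (n - ?s - k) / real n) ^ k)"
      using qk[of n] pq qpos by (simp add: field_simps power_mult_distrib power_divide)
    also have "\<dots> \<ge> ?p ^ card E * (1 + \<delta>)" using elim pq by (intro mult_left_mono) simp_all
    finally have "(1 + \<delta>) * ?p ^ card E \<le> hom_density E n Q" using dens by (simp add: mult.commute)
    then have Phi_le': "Phi E n ?p \<delta> \<le> Ient_mat ?p n Q"
      using Phi_le[OF pq(1,2) clique_cost(2)[OF pq(1,2) _ Q_def]] elim by simp
    have "Ient_mat ?p n Q \<le> real ?s ^ 2 * ln (1 / ?p)" using clique_cost(1)[OF pq(1,2) _ Q_def] elim by simp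
    then have PhiB: "Phi E n ?p \<delta> \<le> real ?s ^ 2 * ln (1 / ?p)" using Phi_le' by linarith
    have lnpos: "ln (1 / ?p) > 0" using pq by simp
    have den: "real n ^ 2 * ?p ^ maxdeg E * ln (1 / ?p) > 0" using pq lnpos by simp
    have "Phi E n ?p \<delta> / (real n ^ 2 * ?p ^ maxdeg E * ln (1 / ?p))
        \<le> real ?s ^ 2 * ln (1 / ?p) / (real n ^ 2 * ?p ^ maxdeg E * ln (1 / ?p))"
      by (rule divide_right_mono[OF PhiB]) (use den in linarith)
    also have "\<dots> = (real (?s - 0) / (real n * ?q)) ^ 2"
      using q2[of n] pq qpos lnpos unfolding D_def by (simp add: field_simps power_mult_distrib power_divide)
    also have "\<dots> < \<delta> powr (2 / real k) + \<epsilon>" using elim by simp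
    finally show ?case unfolding k_def by simp
  qed
qed


theorem proposition3p1:
  fixes E :: "('v::finite \<times> 'v) set" and p :: "nat \<Rightarrow> real" and \<delta> :: real
  assumes "digraph E"
    and "\<delta> > 0"
    and "\<forall>\<^sub>F n in sequentially. 0 < p n"
    and "p \<longlonglongrightarrow> 0"
  shows
    "(weakly_connected E \<and> regular E (maxdeg E)
        \<and> (\<lambda>n. real n powr (- 2 / real (maxdeg E))) \<in> o(p)
      \<longrightarrow> (\<forall>\<epsilon>>0. \<forall>\<^sub>F n in sequentially.
            Phi E n (p n) \<delta> / (real n ^ 2 * p n ^ maxdeg E * ln (1 / p n))
              \<le> \<delta> powr (2 / real (card (UNIV::'v set))) + \<epsilon>))
     \<and>
     ((\<lambda>n. real n powr (- 1 / real (maxdeg E))) \<in> o(p)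
      \<longrightarrow> (\<forall>\<epsilon>>0. \<forall>\<^sub>F n in sequentially.
            Phi E n (p n) \<delta> / (real n ^ 2 * p n ^ maxdeg E * ln (1 / p n))
              \<le> Inf {x1 * y1 + x2 * y2 | x1 x2 y1 y2.
                       0 \<le> x1 \<and> 0 \<le> x2 \<and> 0 \<le> y1 \<and> y1 \<le> 1 \<and> 0 \<le> y2 \<and> y2 \<le> 1
                       \<and> fbar E x1 x2 y1 y2 = 1 + \<delta>} + \<epsilon>))
     \<and>
     Inf {x1 * y1 + x2 * y2 | x1 x2 y1 y2.
            0 \<le> x1 \<and> 0 \<le> x2 \<and> 0 \<le> y1 \<and> y1 \<le> 1 \<and> 0 \<le> y2 \<and> y2 \<le> 1
            \<and> fbar E x1 x2 y1 y2 = 1 + \<delta>}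
     = Inf {x1 * y1 + x2 * y2 | x1 x2 y1 y2.
            0 \<le> x1 \<and> 0 \<le> x2 \<and> 0 \<le> y1 \<and> y1 \<le> 1 \<and> 0 \<le> y2 \<and> y2 \<le> 1
            \<and> max y1 y2 = 1 \<and> fbar E x1 x2 y1 y2 = 1 + \<delta>}"
  proof -
  have PA: "weakly_connected E \<and> regular E (maxdeg E)
        \<and> (\<lambda>n. real n powr (- 2 / real (maxdeg E))) \<in> o(p)
      \<longrightarrow> (\<forall>\<epsilon>>0. \<forall>\<^sub>F n in sequentially.
            Phi E n (p n) \<delta> / (real n ^ 2 * p n ^ maxdeg E * ln (1 / p n))
              \<le> \<delta> powr (2 / real (card (UNIV::'v set))) + \<epsilon>)"
  proof (intro impI allI)
    fix \<epsilon> :: real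
    assume h: "weakly_connected E \<and> regular E (maxdeg E)
        \<and> (\<lambda>n. real n powr (- 2 / real (maxdeg E))) \<in> o(p)" and e: "\<epsilon> > 0"
    show "\<forall>\<^sub>F n in sequentially.
            Phi E n (p n) \<delta> / (real n ^ 2 * p n ^ maxdeg E * ln (1 / p n))
              \<le> \<delta> powr (2 / real (card (UNIV::'v set))) + \<epsilon>"
      using part_a[OF assms(1,2,3,4) _ _ e] h by blast
  qed
  have PB: "(\<lambda>n. real n powr (- 1 / real (maxdeg E))) \<in> o(p)
      \<longrightarrow> (\<forall>\<epsilon>>0. \<forall>\<^sub>F n in sequentially.
            Phi E n (p n) \<delta> / (real n ^ 2 * p n ^ maxdeg E * ln (1 / p n))
              \<le> Inf {x1 * y1 + x2 * y2 | x1 x2 y1 y2.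
                       0 \<le> x1 \<and> 0 \<le> x2 \<and> 0 \<le> y1 \<and> y1 \<le> 1 \<and> 0 \<le> y2 \<and> y2 \<le> 1
                       \<and> fbar E x1 x2 y1 y2 = 1 + \<delta>} + \<epsilon>)"
  proof (intro impI allI)
    fix \<epsilon> :: real
    assume h: "(\<lambda>n. real n powr (- 1 / real (maxdeg E))) \<in> o(p)" and e: "\<epsilon> > 0"
    show "\<forall>\<^sub>F n in sequentially.
            Phi E n (p n) \<delta> / (real n ^ 2 * p n ^ maxdeg E * ln (1 / p n))
              \<le> Inf {x1 * y1 + x2 * y2 | x1 x2 y1 y2.
                       0 \<le> x1 \<and> 0 \<le> x2 \<and> 0 \<le> y1 \<and> y1 \<le> 1 \<and> 0 \<le> y2 \<and> y2 \<le> 1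
                       \<and> fbar E x1 x2 y1 y2 = 1 + \<delta>} + \<epsilon>"
      by (rule part_b[OF assms(1,2,3,4) h e])
  qed
  have PC: "Inf {x1 * y1 + x2 * y2 | x1 x2 y1 y2.
            0 \<le> x1 \<and> 0 \<le> x2 \<and> 0 \<le> y1 \<and> y1 \<le> 1 \<and> 0 \<le> y2 \<and> y2 \<le> 1
            \<and> fbar E x1 x2 y1 y2 = 1 + \<delta>}
     = Inf {x1 * y1 + x2 * y2 | x1 x2 y1 y2.
            0 \<le> x1 \<and> 0 \<le> x2 \<and> 0 \<le> y1 \<and> y1 \<le> 1 \<and> 0 \<le> y2 \<and> y2 \<le> 1
            \<and> max y1 y2 = 1 \<and> fbar E x1 x2 y1 y2 = 1 + \<delta>}"
    by (rule part_c[OF assms(2)])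
  show ?thesis by (intro conjI PA PB PC)
qed

end
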